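(* Let $f,g\in\mathcal H_{(d)}$ be nonzero and $x,y\in\mathbb C^{n+1}$ nonzero, with $\operatorname{rank}Df(x)|_{x^\perp}=n$ and $v<1$. Let $u_g=\frac{D^{3/2}}{2}\mu(g,x)d_R(x,y)$. Then \[(1-v)u_g\le u\le(1+v)u_g\quad\text{and}\quad(1-v)\delta(g,x)-v\le\delta(f,x)\le(1+v)\delta(g,x)+v.\]
   Context: $(d)=(d_1,\dots,d_n)$, $D=\max_i d_i\ge2$. $\mathcal H_{(d)}$: systems of $n$ homogeneous complex polynomials in $n+1$ variables of degrees $d_i$ with the Bombieri–Weyl inner product $\langle f,g\rangle=\sum_i\sum_{|\alpha|=d_i}\frac{\alpha_0!\cdots\alpha_n!}{d_i!}f_{i,\alpha}\overline{g_{i,\alpha}}$ and its norm. $x^\perp$ is the Hermitian orthogonal complement of $x$. $\mu(f,x)=\|f\|\,\|(Df(x)|_{x^\perp})^{-1}\mathrm{diag}(\sqrt{d_i}\|x\|^{d_i-1})\|$ (operator norm). $\delta(f,x)=\|x\|^{-1}\|(Df(x)|_{x^\perp})^{-1}\mathrm{diag}(d_i)f(x)\|$. $d_R(x,y)\in[0,\pi/2]$ with $\cos d_R=|\langle x,y\rangle|/(\|x\|\|y\|)$. $u=\frac{D^{3/2}}{2}\mu(f,x)d_R(x,y)$, $v=D^{1/2}\mu(f,x)\,\big\|\frac{f}{\|f\|}-\frac{g}{\|g\|}\big\|$. *)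

theory Defs
  imports Complex_Main
begin

text \<open>Vectors of C^N are functions nat \<Rightarrow> complex, only the entries
  with index < N are relevant. C^(n+1) uses indices 0..n (variables x_0..x_n),
  C^n uses indices 0..n-1 (equations). A multi-index is alpha :: nat \<Rightarrow> nat
  supported on {0..n}. A system f in H_(d) is given by its coefficients
  f i alpha (i < n), which vanish outside the monomials of degree d i.\<close>

definition mons :: "nat \<Rightarrow> nat \<Rightarrow> (nat \<Rightarrow> nat) set" where
  "mons n k = {\<alpha>. (\<forall>j>n. \<alpha> j = 0) \<and> (\<Sum>j\<le>n. \<alpha> j) = k}"

definition in_Hd :: "nat \<Rightarrow> (nat \<Rightarrow> nat) \<Rightarrow> (nat \<Rightarrow> (nat \<Rightarrow> nat) \<Rightarrow> complex) \<Rightarrow> bool" where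
  "in_Hd n d f \<longleftrightarrow> (\<forall>i \<alpha>. (i \<ge> n \<or> \<alpha> \<notin> mons n (d i)) \<longrightarrow> f i \<alpha> = 0)"

definition bw_inner :: "nat \<Rightarrow> (nat \<Rightarrow> nat) \<Rightarrow> (nat \<Rightarrow> (nat \<Rightarrow> nat) \<Rightarrow> complex)
    \<Rightarrow> (nat \<Rightarrow> (nat \<Rightarrow> nat) \<Rightarrow> complex) \<Rightarrow> complex" where
  "bw_inner n d f g = (\<Sum>i<n. \<Sum>\<alpha>\<in>mons n (d i).
      of_real ((\<Prod>j\<le>n. fact (\<alpha> j)) / fact (d i)) * f i \<alpha> * cnj (g i \<alpha>))"

definition bw_norm :: "nat \<Rightarrow> (nat \<Rightarrow> nat) \<Rightarrow> (nat \<Rightarrow> (nat \<Rightarrow> nat) \<Rightarrow> complex) \<Rightarrow> real" where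
  "bw_norm n d f = sqrt (Re (bw_inner n d f f))"

definition sys_scale :: "complex \<Rightarrow> (nat \<Rightarrow> (nat \<Rightarrow> nat) \<Rightarrow> complex) \<Rightarrow> (nat \<Rightarrow> (nat \<Rightarrow> nat) \<Rightarrow> complex)" where
  "sys_scale c f = (\<lambda>i \<alpha>. c * f i \<alpha>)"

definition sys_diff :: "(nat \<Rightarrow> (nat \<Rightarrow> nat) \<Rightarrow> complex) \<Rightarrow> (nat \<Rightarrow> (nat \<Rightarrow> nat) \<Rightarrow> complex) \<Rightarrow> (nat \<Rightarrow> (nat \<Rightarrow> nat) \<Rightarrow> complex)" where
  "sys_diff f g = (\<lambda>i \<alpha>. f i \<alpha> - g i \<alpha>)"

definition peval :: "nat \<Rightarrow> (nat \<Rightarrow> nat) \<Rightarrow> (nat \<Rightarrow> (nat \<Rightarrow> nat) \<Rightarrow> complex) \<Rightarrow> nat \<Rightarrow> (nat \<Rightarrow> complex) \<Rightarrow> complex" where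
  "peval n d f i x = (\<Sum>\<alpha>\<in>mons n (d i). f i \<alpha> * (\<Prod>j\<le>n. x j ^ \<alpha> j))"

definition ppartial :: "nat \<Rightarrow> (nat \<Rightarrow> nat) \<Rightarrow> (nat \<Rightarrow> (nat \<Rightarrow> nat) \<Rightarrow> complex) \<Rightarrow> nat \<Rightarrow> nat \<Rightarrow> (nat \<Rightarrow> complex) \<Rightarrow> complex" where
  "ppartial n d f i j x = (\<Sum>\<alpha>\<in>mons n (d i).
      f i \<alpha> * of_nat (\<alpha> j) * x j ^ (\<alpha> j - 1) * (\<Prod>k\<in>{..n} - {j}. x k ^ \<alpha> k))"

definition Dfapp :: "nat \<Rightarrow> (nat \<Rightarrow> nat) \<Rightarrow> (nat \<Rightarrow> (nat \<Rightarrow> nat) \<Rightarrow> complex) \<Rightarrow> (nat \<Rightarrow> complex) \<Rightarrow> (nat \<Rightarrow> complex) \<Rightarrow> (nat \<Rightarrow> complex)" where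
  "Dfapp n d f x z = (\<lambda>i. if i < n then (\<Sum>j\<le>n. ppartial n d f i j x * z j) else 0)"

definition cspace :: "nat \<Rightarrow> (nat \<Rightarrow> complex) set" where
  "cspace N = {z. \<forall>j\<ge>N. z j = 0}"

definition hinner :: "nat \<Rightarrow> (nat \<Rightarrow> complex) \<Rightarrow> (nat \<Rightarrow> complex) \<Rightarrow> complex" where
  "hinner N x y = (\<Sum>j<N. x j * cnj (y j))"

definition vnorm :: "nat \<Rightarrow> (nat \<Rightarrow> complex) \<Rightarrow> real" where
  "vnorm N x = sqrt (\<Sum>j<N. (cmod (x j))\<^sup>2)"

definition perp :: "nat \<Rightarrow> (nat \<Rightarrow> complex) \<Rightarrow> (nat \<Rightarrow> complex) set" where
  "perp n x = {z \<in> cspace (Suc n). hinner (Suc n) z x = 0}"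

text \<open>rank (Df(x) restricted to x^perp) = n, i.e. the restriction (a linear map
  into C^n) has image all of C^n.\<close>
definition rank_full :: "nat \<Rightarrow> (nat \<Rightarrow> nat) \<Rightarrow> (nat \<Rightarrow> (nat \<Rightarrow> nat) \<Rightarrow> complex) \<Rightarrow> (nat \<Rightarrow> complex) \<Rightarrow> bool" where
  "rank_full n d f x \<longleftrightarrow> Dfapp n d f x ` perp n x = cspace n"

definition rinv :: "nat \<Rightarrow> (nat \<Rightarrow> nat) \<Rightarrow> (nat \<Rightarrow> (nat \<Rightarrow> nat) \<Rightarrow> complex) \<Rightarrow> (nat \<Rightarrow> complex) \<Rightarrow> (nat \<Rightarrow> complex) \<Rightarrow> (nat \<Rightarrow> complex)" where
  "rinv n d f x w = (THE z. z \<in> perp n x \<and> Dfapp n d f x z = w)"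

definition opnorm :: "nat \<Rightarrow> ((nat \<Rightarrow> complex) \<Rightarrow> (nat \<Rightarrow> complex)) \<Rightarrow> real" where
  "opnorm n L = Sup {vnorm (Suc n) (L w) | w. w \<in> cspace n \<and> vnorm n w \<le> 1}"

definition mu :: "nat \<Rightarrow> (nat \<Rightarrow> nat) \<Rightarrow> (nat \<Rightarrow> (nat \<Rightarrow> nat) \<Rightarrow> complex) \<Rightarrow> (nat \<Rightarrow> complex) \<Rightarrow> real" where
  "mu n d f x = bw_norm n d f * opnorm n (\<lambda>w. rinv n d f x
      (\<lambda>i. if i < n then of_real (sqrt (real (d i)) * vnorm (Suc n) x ^ (d i - 1)) * w i else 0))"

definition delta :: "nat \<Rightarrow> (nat \<Rightarrow> nat) \<Rightarrow> (nat \<Rightarrow> (nat \<Rightarrow> nat) \<Rightarrow> complex) \<Rightarrow> (nat \<Rightarrow> complex) \<Rightarrow> real" where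
  "delta n d f x = vnorm (Suc n) (rinv n d f x
      (\<lambda>i. if i < n then of_nat (d i) * peval n d f i x else 0)) / vnorm (Suc n) x"

definition dR :: "nat \<Rightarrow> (nat \<Rightarrow> complex) \<Rightarrow> (nat \<Rightarrow> complex) \<Rightarrow> real" where
  "dR n x y = arccos (cmod (hinner (Suc n) x y) / (vnorm (Suc n) x * vnorm (Suc n) y))"

definition Dmax :: "nat \<Rightarrow> (nat \<Rightarrow> nat) \<Rightarrow> nat" where
  "Dmax n d = Max (d ` {..<n})"

end

theory Submission
  imports Defs "Jordan_Normal_Form.Determinant"
begin


lemma CS_sum:
  fixes a b :: "'a \<Rightarrow> real"
  shows "(\<Sum>i\<in>I. a i * b i)\<^sup>2 \<le> (\<Sum>i\<in>I. (a i)\<^sup>2) * (\<Sum>i\<in>I. (b i)\<^sup>2)"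
proof (cases "(\<Sum>i\<in>I. (b i)\<^sup>2) > 0")
  case False
  then consider "\<And>i. i\<in>I \<Longrightarrow> b i = 0" | "infinite I"
    by (metis (mono_tags, lifting) sum_pos2 zero_le_power2 zero_less_power2)
  thus ?thesis
    by fastforce
next
  case True
  define r where "r \<equiv> (\<Sum>i\<in>I. a i * b i) / (\<Sum>i\<in>I. (b i)\<^sup>2)"
  have "0 \<le> (\<Sum>i\<in>I. (a i - r * b i)\<^sup>2)"
    by (simp add: sum_nonneg)
  also have "... = (\<Sum>i\<in>I. (a i)\<^sup>2) - 2 * r * (\<Sum>i\<in>I. a i * b i) + r\<^sup>2 * (\<Sum>i\<in>I. (b i)\<^sup>2)"
    by (simp add: algebra_simps power2_eq_square sum_distrib_left flip: sum.distrib)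
  also have "\<dots> = (\<Sum>i\<in>I. (a i)\<^sup>2) - ((\<Sum>i\<in>I. a i * b i))\<^sup>2 / (\<Sum>i\<in>I. (b i)\<^sup>2)"
    by (simp add: r_def power2_eq_square)
  finally have "0 \<le> (\<Sum>i\<in>I. (a i)\<^sup>2) - ((\<Sum>i\<in>I. a i * b i))\<^sup>2 / (\<Sum>i\<in>I. (b i)\<^sup>2)" .
  hence "((\<Sum>i\<in>I. a i * b i))\<^sup>2 / (\<Sum>i\<in>I. (b i)\<^sup>2) \<le> (\<Sum>i\<in>I. (a i)\<^sup>2)"
    by (simp add: le_diff_eq)
  thus "((\<Sum>i\<in>I. a i * b i))\<^sup>2 \<le> (\<Sum>i\<in>I. (a i)\<^sup>2) * (\<Sum>i\<in>I. (b i)\<^sup>2)"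
    by (simp add: pos_divide_le_eq True)
qed

lemma finite_mons: "finite (mons n k)"
proof -
  have "mons n k \<subseteq> {\<alpha>. \<forall>j. (j \<in> {..n} \<longrightarrow> \<alpha> j \<in> {..k}) \<and> (j \<notin> {..n} \<longrightarrow> \<alpha> j = 0)}"
  proof
    fix \<alpha> assume a: "\<alpha> \<in> mons n k"
    then have s: "(\<Sum>j\<le>n. \<alpha> j) = k" and z: "\<forall>j>n. \<alpha> j = 0" by (auto simp: mons_def)
    have "\<alpha> j \<le> k" if "j \<le> n" for j
    proof -
      have "\<alpha> j \<le> (\<Sum>j\<le>n. \<alpha> j)" using that by (intro member_le_sum) auto
      with s show ?thesis by simp
    qed
    then show "\<alpha> \<in> {\<alpha>. \<forall>j. (j \<in> {..n} \<longrightarrow> \<alpha> j \<in> {..k}) \<and> (j \<notin> {..n} \<longrightarrow> \<alpha> j = 0)}"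
      using z by auto
  qed
  moreover have "finite {\<alpha>. \<forall>j. (j \<in> {..n} \<longrightarrow> \<alpha> j \<in> {..k}) \<and> (j \<notin> {..n} \<longrightarrow> \<alpha> j = (0::nat))}"
    by (rule finite_set_of_finite_funs) auto
  ultimately show ?thesis by (rule finite_subset)
qed

lemma mons_0: "mons n 0 = {\<lambda>_. 0}"
proof (rule Set.set_eqI, rule HOL.iffI)
  fix \<alpha> assume "\<alpha> \<in> mons n 0"
  then have s: "(\<Sum>j\<le>n. \<alpha> j) = 0" and z: "\<forall>j>n. \<alpha> j = 0" by (auto simp: mons_def)
  from s have "\<forall>j\<le>n. \<alpha> j = 0" by simp
  with z have "\<alpha> = (\<lambda>_. 0)" by (intro ext) (metis not_le)
  then show "\<alpha> \<in> {\<lambda>_. 0}" by simp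
qed (simp add: mons_def)

lemma sum_upd:
  assumes "finite A" "j \<in> A"
  shows "(\<Sum>l\<in>A. (\<gamma>(j:=a)) l) + \<gamma> j = (\<Sum>l\<in>A. \<gamma> l) + (a::nat)"
proof -
  have 1: "(\<Sum>l\<in>A-{j}. (\<gamma>(j:=a)) l) = (\<Sum>l\<in>A-{j}. \<gamma> l)" by (rule sum.cong) auto
  show ?thesis using sum.remove[OF assms, of "\<gamma>(j:=a)"] sum.remove[OF assms, of \<gamma>] 1 by simp
qed

lemma prod_upd:
  assumes "finite A" "j \<in> A"
  shows "(\<Prod>l\<in>A. H l ((\<gamma>(j:=a)) l)) = H j a * (\<Prod>l\<in>A-{j}. H l (\<gamma> l))"
proof -
  have 1: "(\<Prod>l\<in>A-{j}. H l ((\<gamma>(j:=a)) l)) = (\<Prod>l\<in>A-{j}. H l (\<gamma> l))" by (rule prod.cong) auto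
  show ?thesis using prod.remove[OF assms, of "\<lambda>l. H l ((\<gamma>(j:=a)) l)"] 1 by simp
qed

lemma mons_upd_bij:
  assumes j: "j \<le> n"
  shows "bij_betw (\<lambda>\<gamma>. \<gamma>(j := Suc (\<gamma> j))) (mons n k) {\<alpha> \<in> mons n (Suc k). 0 < \<alpha> j}"
proof -
  let ?f = "\<lambda>\<gamma>. \<gamma>(j := Suc (\<gamma> j))" and ?g = "\<lambda>\<alpha>. \<alpha>(j := \<alpha> j - 1)"
  have h1: "\<forall>a\<in>mons n k. ?g (?f a) = a" by simp
  have h2: "\<forall>a\<in>{\<alpha> \<in> mons n (Suc k). 0 < \<alpha> j}. ?f (?g a) = a" by auto
  have h3: "?f ` mons n k \<subseteq> {\<alpha> \<in> mons n (Suc k). 0 < \<alpha> j}"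
  proof (rule image_subsetI)
    fix \<gamma> assume g: "\<gamma> \<in> mons n k"
    have "(\<Sum>l\<le>n. (\<gamma>(j := Suc (\<gamma> j))) l) + \<gamma> j = (\<Sum>l\<le>n. \<gamma> l) + Suc (\<gamma> j)"
      using j by (intro sum_upd) auto
    then show "?f \<gamma> \<in> {\<alpha> \<in> mons n (Suc k). 0 < \<alpha> j}" using g j by (auto simp: mons_def)
  qed
  have h4: "?g ` {\<alpha> \<in> mons n (Suc k). 0 < \<alpha> j} \<subseteq> mons n k"
  proof (rule image_subsetI)
    fix \<alpha> assume "\<alpha> \<in> {\<alpha> \<in> mons n (Suc k). 0 < \<alpha> j}"
    then have a: "\<alpha> \<in> mons n (Suc k)" "0 < \<alpha> j" by auto
    have "(\<Sum>l\<le>n. (\<alpha>(j := \<alpha> j - 1)) l) + \<alpha> j = (\<Sum>l\<le>n. \<alpha> l) + (\<alpha> j - 1)"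
      using j by (intro sum_upd) auto
    then show "?g \<alpha> \<in> mons n k" using a j by (auto simp: mons_def)
  qed
  show ?thesis by (rule bij_betw_byWitness[OF h1 h2 h3 h4])
qed

lemma sum_mons_pos:
  assumes "j \<le> n"
  shows "(\<Sum>\<alpha>\<in>{\<alpha> \<in> mons n (Suc k). 0 < \<alpha> j}. F \<alpha>) = (\<Sum>\<gamma>\<in>mons n k. F (\<gamma>(j := Suc (\<gamma> j))))"
  using sum.reindex_bij_betw[OF mons_upd_bij[OF assms, of k], of F] by simp

lemma sum_mons_pos':
  assumes "j \<le> n" and "\<And>\<alpha>. \<alpha> j = 0 \<Longrightarrow> F \<alpha> = 0"
  shows "(\<Sum>\<alpha>\<in>mons n (Suc k). F \<alpha>) = (\<Sum>\<gamma>\<in>mons n k. F (\<gamma>(j := Suc (\<gamma> j))))"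
proof -
  have "(\<Sum>\<alpha>\<in>mons n (Suc k). F \<alpha>) = (\<Sum>\<alpha>\<in>{\<alpha> \<in> mons n (Suc k). 0 < \<alpha> j}. F \<alpha>)"
    by (rule sum.mono_neutral_right) (auto simp: finite_mons assms(2))
  then show ?thesis using sum_mons_pos[OF assms(1)] by simp
qed

lemma fact_term:
  fixes y :: "nat \<Rightarrow> real"
  assumes j: "j \<le> n"
  shows "real (Suc (\<gamma> j)) * (c / (\<Prod>l\<le>n. fact ((\<gamma>(j := Suc (\<gamma> j))) l)) * (\<Prod>l\<le>n. y l ^ (\<gamma>(j := Suc (\<gamma> j))) l))
       = y j * (c / (\<Prod>l\<le>n. fact (\<gamma> l)) * (\<Prod>l\<le>n. y l ^ \<gamma> l))"
proof -
  have jA: "j \<in> {..n}" using j by simp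
  define P where "P = (\<Prod>l\<in>{..n}-{j}. (fact (\<gamma> l) :: real))"
  define Q where "Q = (\<Prod>l\<in>{..n}-{j}. y l ^ \<gamma> l)"
  have 1: "(\<Prod>l\<le>n. (fact ((\<gamma>(j := Suc (\<gamma> j))) l) :: real)) = fact (Suc (\<gamma> j)) * P"
    unfolding P_def using prod_upd[OF _ jA, of "\<lambda>l a. (fact a :: real)"] by simp
  have 2: "(\<Prod>l\<le>n. y l ^ (\<gamma>(j := Suc (\<gamma> j))) l) = y j ^ Suc (\<gamma> j) * Q"
    unfolding Q_def using prod_upd[OF _ jA, of "\<lambda>l a. y l ^ a"] by simp
  have 3: "(\<Prod>l\<le>n. (fact (\<gamma> l) :: real)) = fact (\<gamma> j) * P"
    unfolding P_def using prod.remove[OF _ jA, of "\<lambda>l. (fact (\<gamma> l) :: real)"] by simp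
  have 4: "(\<Prod>l\<le>n. y l ^ \<gamma> l) = y j ^ \<gamma> j * Q"
    unfolding Q_def using prod.remove[OF _ jA, of "\<lambda>l. y l ^ \<gamma> l"] by simp
  have P0: "P \<noteq> 0" unfolding P_def by (simp add: prod_zero_iff)
  have f0: "(fact (\<gamma> j) :: real) \<noteq> 0" by simp
  have F: "(fact (Suc (\<gamma> j))::real) = real (Suc (\<gamma> j)) * fact (\<gamma> j)"
    by (simp only: fact_Suc)
  have s0: "real (Suc (\<gamma> j)) \<noteq> 0" by simp
  show ?thesis unfolding 1 2 3 4 F using P0 f0 s0
    by (simp add: field_simps del: of_nat_Suc)
qed

lemma multinom:
  fixes y :: "nat \<Rightarrow> real"
  shows "(\<Sum>\<gamma>\<in>mons n k. fact k / (\<Prod>l\<le>n. fact (\<gamma> l)) * (\<Prod>l\<le>n. y l ^ \<gamma> l)) = (\<Sum>l\<le>n. y l) ^ k"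
proof (induction k)
  case 0
  then show ?case by (simp add: mons_0)
next
  case (Suc k)
  define T where "T \<gamma> = fact k / (\<Prod>l\<le>n. fact (\<gamma> l)) * (\<Prod>l\<le>n. y l ^ \<gamma> l)" for \<gamma>
  have "(\<Sum>\<alpha>\<in>mons n (Suc k). fact (Suc k) / (\<Prod>l\<le>n. fact (\<alpha> l)) * (\<Prod>l\<le>n. y l ^ \<alpha> l))
      = (\<Sum>\<alpha>\<in>mons n (Suc k). (\<Sum>j\<le>n. real (\<alpha> j)) * T \<alpha>)"
  proof (rule sum.cong[OF refl])
    fix \<alpha> assume "\<alpha> \<in> mons n (Suc k)"
    then have s: "(\<Sum>j\<le>n. \<alpha> j) = Suc k" by (simp add: mons_def)
    have "(\<Sum>j\<le>n. real (\<alpha> j)) = real (Suc k)" using s by (metis of_nat_sum)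
    then show "fact (Suc k) / (\<Prod>l\<le>n. fact (\<alpha> l)) * (\<Prod>l\<le>n. y l ^ \<alpha> l) = (\<Sum>j\<le>n. real (\<alpha> j)) * T \<alpha>"
      unfolding T_def by (simp add: fact_Suc)
  qed
  also have "\<dots> = (\<Sum>j\<le>n. \<Sum>\<alpha>\<in>mons n (Suc k). real (\<alpha> j) * T \<alpha>)"
    by (simp add: sum_distrib_right sum.swap[of _ "mons n (Suc k)"])
  also have "\<dots> = (\<Sum>j\<le>n. \<Sum>\<gamma>\<in>mons n k. y j * T \<gamma>)"
  proof (rule sum.cong[OF refl])
    fix j assume j: "j \<in> {..n}"
    have "(\<Sum>\<alpha>\<in>mons n (Suc k). real (\<alpha> j) * T \<alpha>)
        = (\<Sum>\<gamma>\<in>mons n k. real ((\<gamma>(j := Suc (\<gamma> j))) j) * T (\<gamma>(j := Suc (\<gamma> j))))"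
      using j by (intro sum_mons_pos') auto
    also have "\<dots> = (\<Sum>\<gamma>\<in>mons n k. y j * T \<gamma>)"
      using j unfolding T_def by (intro sum.cong[OF refl]) (simp only: fun_upd_same fact_term[of j n] atMost_iff)
    finally show "(\<Sum>\<alpha>\<in>mons n (Suc k). real (\<alpha> j) * T \<alpha>) = (\<Sum>\<gamma>\<in>mons n k. y j * T \<gamma>)" .
  qed
  also have "\<dots> = (\<Sum>l\<le>n. y l) * (\<Sum>\<gamma>\<in>mons n k. T \<gamma>)"
    by (simp add: sum_distrib_left sum_distrib_right sum.swap[of _ "{..n}"])
  also have "\<dots> = (\<Sum>l\<le>n. y l) ^ Suc k" using Suc unfolding T_def by simp
  finally show ?case .
qed



definition wt :: "nat \<Rightarrow> nat \<Rightarrow> (nat \<Rightarrow> nat) \<Rightarrow> real" where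
  "wt n k \<alpha> = (\<Prod>j\<le>n. fact (\<alpha> j)) / fact k"

definition rn :: "nat \<Rightarrow> (nat \<Rightarrow> nat) \<Rightarrow> (nat \<Rightarrow> (nat \<Rightarrow> nat) \<Rightarrow> complex) \<Rightarrow> nat \<Rightarrow> real" where
  "rn n d h i = (\<Sum>\<alpha>\<in>mons n (d i). wt n (d i) \<alpha> * (cmod (h i \<alpha>))\<^sup>2)"

lemma wt_pos: "wt n k \<alpha> > 0"
  unfolding wt_def by (intro divide_pos_pos prod_pos) auto

lemma rn_nonneg: "rn n d h i \<ge> 0"
  unfolding rn_def using wt_pos by (intro sum_nonneg) (simp add: less_imp_le)

lemma Re_term: "Re (complex_of_real w * a * cnj a) = w * (cmod a)\<^sup>2"
  by (simp add: mult.assoc complex_norm_square[symmetric] of_real_mult[symmetric] del: of_real_mult)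

lemma Re_bw_inner: "Re (bw_inner n d h h) = (\<Sum>i<n. rn n d h i)"
  unfolding bw_inner_def rn_def wt_def Re_sum Re_term ..

lemma bw_norm_sq: "(bw_norm n d h)\<^sup>2 = (\<Sum>i<n. rn n d h i)"
  unfolding bw_norm_def Re_bw_inner
  by (rule real_sqrt_pow2, rule sum_nonneg, rule rn_nonneg)

lemma bw_norm_nonneg: "bw_norm n d h \<ge> 0"
  unfolding bw_norm_def Re_bw_inner by (rule real_sqrt_ge_zero, rule sum_nonneg, rule rn_nonneg)

lemma vnorm_nonneg: "vnorm N z \<ge> 0"
  unfolding vnorm_def by (rule real_sqrt_ge_zero, rule sum_nonneg, simp)

lemma vnorm_sq: "(vnorm N z)\<^sup>2 = (\<Sum>j<N. (cmod (z j))\<^sup>2)"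
  unfolding vnorm_def by (rule real_sqrt_pow2, rule sum_nonneg, simp)

lemma CSw:
  fixes h c :: "'a \<Rightarrow> complex"
  assumes "\<forall>\<alpha>\<in>M. w \<alpha> > 0"
  shows "cmod (\<Sum>\<alpha>\<in>M. h \<alpha> * c \<alpha>) \<le> sqrt (\<Sum>\<alpha>\<in>M. w \<alpha> * (cmod (h \<alpha>))\<^sup>2) * sqrt (\<Sum>\<alpha>\<in>M. (cmod (c \<alpha>))\<^sup>2 / w \<alpha>)"
proof -
  have "cmod (\<Sum>\<alpha>\<in>M. h \<alpha> * c \<alpha>) \<le> (\<Sum>\<alpha>\<in>M. cmod (h \<alpha>) * cmod (c \<alpha>))"
    by (rule order_trans[OF norm_sum]) (simp add: norm_mult)
  also have "\<dots> = (\<Sum>\<alpha>\<in>M. (sqrt (w \<alpha>) * cmod (h \<alpha>)) * (cmod (c \<alpha>) / sqrt (w \<alpha>)))"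
    using assms by (intro sum.cong refl) auto
  also have "\<dots> \<le> sqrt ((\<Sum>\<alpha>\<in>M. (sqrt (w \<alpha>) * cmod (h \<alpha>))\<^sup>2) * (\<Sum>\<alpha>\<in>M. (cmod (c \<alpha>) / sqrt (w \<alpha>))\<^sup>2))"
    by (rule real_le_rsqrt) (rule CS_sum)
  also have "\<dots> = sqrt (\<Sum>\<alpha>\<in>M. w \<alpha> * (cmod (h \<alpha>))\<^sup>2) * sqrt (\<Sum>\<alpha>\<in>M. (cmod (c \<alpha>))\<^sup>2 / w \<alpha>)"
  proof -
    have 1: "(\<Sum>\<alpha>\<in>M. (sqrt (w \<alpha>) * cmod (h \<alpha>))\<^sup>2) = (\<Sum>\<alpha>\<in>M. w \<alpha> * (cmod (h \<alpha>))\<^sup>2)"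
      by (intro sum.cong refl) (use assms in \<open>auto simp: power_mult_distrib less_imp_le\<close>)
    have 2: "(\<Sum>\<alpha>\<in>M. (cmod (c \<alpha>) / sqrt (w \<alpha>))\<^sup>2) = (\<Sum>\<alpha>\<in>M. (cmod (c \<alpha>))\<^sup>2 / w \<alpha>)"
      by (intro sum.cong refl) (use assms in \<open>auto simp: power_divide less_imp_le\<close>)
    show ?thesis unfolding 1 2 by (simp add: real_sqrt_mult)
  qed
  finally show ?thesis .
qed

lemma cmod_mono_sq: "(cmod (\<Prod>l\<in>A. x l ^ \<gamma> l))\<^sup>2 = (\<Prod>l\<in>A. ((cmod (x l))\<^sup>2) ^ \<gamma> l)"
  by (simp add: prod_norm[symmetric] norm_power prod_power_distrib flip: power_mult) (simp add: mult.commute)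

lemma sum_atMost_lessThan: "(\<Sum>l\<le>n. f l) = (\<Sum>l<Suc n. f l)"
  by (simp add: lessThan_Suc_atMost)

lemma eval_bound: "cmod (peval n d h i x) \<le> sqrt (rn n d h i) * vnorm (Suc n) x ^ d i"
proof -
  let ?X = "\<lambda>\<alpha>. \<Prod>j\<le>n. x j ^ \<alpha> j"
  have "cmod (peval n d h i x) \<le> sqrt (rn n d h i) * sqrt (\<Sum>\<alpha>\<in>mons n (d i). (cmod (?X \<alpha>))\<^sup>2 / wt n (d i) \<alpha>)"
    unfolding peval_def rn_def
    using CSw[of "mons n (d i)" "wt n (d i)" "\<lambda>\<alpha>. h i \<alpha>" ?X] wt_pos by simp
  also have "(\<Sum>\<alpha>\<in>mons n (d i). (cmod (?X \<alpha>))\<^sup>2 / wt n (d i) \<alpha>)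
      = (\<Sum>\<alpha>\<in>mons n (d i). fact (d i) / (\<Prod>l\<le>n. fact (\<alpha> l)) * (\<Prod>l\<le>n. ((cmod (x l))\<^sup>2) ^ \<alpha> l))"
    unfolding cmod_mono_sq wt_def by (intro sum.cong refl) simp
  also have "\<dots> = (\<Sum>l\<le>n. (cmod (x l))\<^sup>2) ^ d i" by (rule multinom)
  also have "\<dots> = ((vnorm (Suc n) x)\<^sup>2) ^ d i" unfolding vnorm_sq sum_atMost_lessThan ..
  also have "sqrt \<dots> = vnorm (Suc n) x ^ d i" by (simp add: real_sqrt_power vnorm_nonneg)
  finally show ?thesis .
qed

lemma fact_term2:
  fixes \<gamma> :: "nat \<Rightarrow> nat"
  assumes j: "j \<le> n"
  shows "real (Suc (\<gamma> j)) / (\<Prod>l\<le>n. fact ((\<gamma>(j := Suc (\<gamma> j))) l)) = 1 / (\<Prod>l\<le>n. (fact (\<gamma> l) :: real))"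
proof -
  have jA: "j \<in> {..n}" using j by simp
  define P where "P = (\<Prod>l\<in>{..n}-{j}. (fact (\<gamma> l) :: real))"
  have 1: "(\<Prod>l\<le>n. (fact ((\<gamma>(j := Suc (\<gamma> j))) l) :: real)) = fact (Suc (\<gamma> j)) * P"
    unfolding P_def by (rule prod_upd[OF finite_atMost jA, where H = "\<lambda>l a. (fact a :: real)"])
  have 3: "(\<Prod>l\<le>n. (fact (\<gamma> l) :: real)) = fact (\<gamma> j) * P"
    unfolding P_def using prod.remove[OF _ jA, of "\<lambda>l. (fact (\<gamma> l) :: real)"] by (simp del: fact_Suc)
  have F: "(fact (Suc (\<gamma> j))::real) = real (Suc (\<gamma> j)) * fact (\<gamma> j)"
    by (simp only: fact_Suc)
  have P0: "P \<noteq> 0" unfolding P_def by (simp add: prod_zero_iff)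
  have s0: "real (Suc (\<gamma> j)) \<noteq> 0" by simp
  show ?thesis unfolding 1 3 F using P0 s0 by (simp del: of_nat_Suc fact_Suc)
qed



lemma sq_sum_bound:
  fixes a q :: "nat \<Rightarrow> real"
  assumes "\<And>j. j \<in> A \<Longrightarrow> 0 \<le> a j"
  shows "(\<Sum>j\<in>A. a j * q j)\<^sup>2 \<le> (\<Sum>j\<in>A. a j) * (\<Sum>j\<in>A. a j * (q j)\<^sup>2)"
proof -
  have "(\<Sum>j\<in>A. a j * q j) = (\<Sum>j\<in>A. sqrt (a j) * (sqrt (a j) * q j))"
    using assms by (intro sum.cong refl) (simp add: mult.assoc[symmetric])
  also have "(\<dots>)\<^sup>2 \<le> (\<Sum>j\<in>A. (sqrt (a j))\<^sup>2) * (\<Sum>j\<in>A. (sqrt (a j) * q j)\<^sup>2)"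
    by (rule CS_sum)
  also have "\<dots> = (\<Sum>j\<in>A. a j) * (\<Sum>j\<in>A. a j * (q j)\<^sup>2)"
    using assms by (simp add: power_mult_distrib)
  finally show ?thesis .
qed

lemma deriv_bound:
  assumes d1: "1 \<le> d i"
  shows "cmod (Dfapp n d h x z i) \<le> real (d i) * sqrt (rn n d h i) * vnorm (Suc n) x ^ (d i - 1) * vnorm (Suc n) z"
proof (cases "i < n")
  case False
  then show ?thesis unfolding Dfapp_def
    by (simp add: rn_nonneg vnorm_nonneg)
next
  case True
  obtain k where k: "d i = Suc k" using d1 by (cases "d i") auto
  define M where "M = mons n (d i)"
  define R where "R \<alpha> j = x j ^ (\<alpha> j - 1) * (\<Prod>l\<in>{..n}-{j}. x l ^ \<alpha> l)" for \<alpha> j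
  define c where "c \<alpha> = (\<Sum>j\<le>n. of_nat (\<alpha> j) * R \<alpha> j * z j)" for \<alpha>
  define S where "S = (\<Sum>l\<le>n. (cmod (x l))\<^sup>2)"
  define Z where "Z = (\<Sum>l\<le>n. (cmod (z l))\<^sup>2)"
  have eq: "Dfapp n d h x z i = (\<Sum>\<alpha>\<in>M. h i \<alpha> * c \<alpha>)"
    unfolding Dfapp_def ppartial_def c_def R_def M_def using True
    by (simp add: sum_distrib_left sum_distrib_right sum.swap[of _ "{..n}"] mult_ac)
  have 1: "cmod (Dfapp n d h x z i) \<le> sqrt (rn n d h i) * sqrt (\<Sum>\<alpha>\<in>M. (cmod (c \<alpha>))\<^sup>2 / wt n (d i) \<alpha>)"
    unfolding eq rn_def M_def
    using CSw[of "mons n (d i)" "wt n (d i)" "\<lambda>\<alpha>. h i \<alpha>" c] wt_pos by simp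
  have pt: "(cmod (c \<alpha>))\<^sup>2 / wt n (d i) \<alpha> \<le> real (d i) * (\<Sum>j\<le>n. (cmod (z j))\<^sup>2 * (real (\<alpha> j) * (cmod (R \<alpha> j))\<^sup>2 / wt n (d i) \<alpha>))"
    if a: "\<alpha> \<in> M" for \<alpha>
  proof -
    have s: "(\<Sum>j\<le>n. real (\<alpha> j)) = real (d i)"
      using a unfolding M_def mons_def by (simp flip: of_nat_sum)
    have "cmod (c \<alpha>) \<le> (\<Sum>j\<le>n. real (\<alpha> j) * (cmod (R \<alpha> j) * cmod (z j)))"
      unfolding c_def by (rule order_trans[OF norm_sum]) (simp add: norm_mult mult.assoc)
    then have "(cmod (c \<alpha>))\<^sup>2 \<le> (\<Sum>j\<le>n. real (\<alpha> j) * (cmod (R \<alpha> j) * cmod (z j)))\<^sup>2"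
      by (intro power_mono) auto
    also have "\<dots> \<le> (\<Sum>j\<le>n. real (\<alpha> j)) * (\<Sum>j\<le>n. real (\<alpha> j) * (cmod (R \<alpha> j) * cmod (z j))\<^sup>2)"
      by (rule sq_sum_bound) simp
    finally have "(cmod (c \<alpha>))\<^sup>2 \<le> real (d i) * (\<Sum>j\<le>n. real (\<alpha> j) * (cmod (R \<alpha> j) * cmod (z j))\<^sup>2)"
      unfolding s .
    then have "(cmod (c \<alpha>))\<^sup>2 / wt n (d i) \<alpha> \<le> real (d i) * (\<Sum>j\<le>n. real (\<alpha> j) * (cmod (R \<alpha> j) * cmod (z j))\<^sup>2) / wt n (d i) \<alpha>"
      using wt_pos[of n "d i" \<alpha>] by (simp add: divide_right_mono)
    also have "\<dots> = real (d i) * (\<Sum>j\<le>n. (cmod (z j))\<^sup>2 * (real (\<alpha> j) * (cmod (R \<alpha> j))\<^sup>2 / wt n (d i) \<alpha>))"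
      by (simp add: sum_divide_distrib sum_distrib_left power_mult_distrib mult_ac)
    finally show ?thesis .
  qed
  have inner: "(\<Sum>\<alpha>\<in>M. real (\<alpha> j) * (cmod (R \<alpha> j))\<^sup>2 / wt n (d i) \<alpha>) = real (d i) * S ^ k"
    if j: "j \<le> n" for j
  proof -
    have "(\<Sum>\<alpha>\<in>M. real (\<alpha> j) * (cmod (R \<alpha> j))\<^sup>2 / wt n (d i) \<alpha>)
        = (\<Sum>\<gamma>\<in>mons n k. real ((\<gamma>(j := Suc (\<gamma> j))) j) * (cmod (R (\<gamma>(j := Suc (\<gamma> j))) j))\<^sup>2 / wt n (d i) (\<gamma>(j := Suc (\<gamma> j))))"
      unfolding M_def k using j by (intro sum_mons_pos') auto
    also have "\<dots> = (\<Sum>\<gamma>\<in>mons n k. real (Suc k) * (fact k / (\<Prod>l\<le>n. fact (\<gamma> l)) * (\<Prod>l\<le>n. ((cmod (x l))\<^sup>2) ^ \<gamma> l)))"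
    proof (intro sum.cong refl)
      fix \<gamma> :: "nat \<Rightarrow> nat"
      have jA: "j \<in> {..n}" using j by simp
      have R: "R (\<gamma>(j := Suc (\<gamma> j))) j = (\<Prod>l\<le>n. x l ^ \<gamma> l)"
      proof -
        have "(\<Prod>l\<in>{..n}-{j}. x l ^ (\<gamma>(j := Suc (\<gamma> j))) l) = (\<Prod>l\<in>{..n}-{j}. x l ^ \<gamma> l)"
          by (rule prod.cong) auto
        then show ?thesis unfolding R_def using prod.remove[OF finite_atMost jA, of "\<lambda>l. x l ^ \<gamma> l"]
          by simp
      qed
      have W: "real (Suc (\<gamma> j)) / wt n (d i) (\<gamma>(j := Suc (\<gamma> j))) = fact (Suc k) / (\<Prod>l\<le>n. fact (\<gamma> l))"
        unfolding wt_def k using fact_term2[OF j, of \<gamma>] by (simp add: field_simps del: of_nat_Suc fact_Suc)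
      show "real ((\<gamma>(j := Suc (\<gamma> j))) j) * (cmod (R (\<gamma>(j := Suc (\<gamma> j))) j))\<^sup>2 / wt n (d i) (\<gamma>(j := Suc (\<gamma> j)))
          = real (Suc k) * (fact k / (\<Prod>l\<le>n. fact (\<gamma> l)) * (\<Prod>l\<le>n. ((cmod (x l))\<^sup>2) ^ \<gamma> l))"
      proof -
        have "real ((\<gamma>(j := Suc (\<gamma> j))) j) * (cmod (R (\<gamma>(j := Suc (\<gamma> j))) j))\<^sup>2 / wt n (d i) (\<gamma>(j := Suc (\<gamma> j)))
          = (real (Suc (\<gamma> j)) / wt n (d i) (\<gamma>(j := Suc (\<gamma> j)))) * (\<Prod>l\<le>n. ((cmod (x l))\<^sup>2) ^ \<gamma> l)"
          unfolding R cmod_mono_sq fun_upd_same using wt_pos[of n "d i" "\<gamma>(j := Suc (\<gamma> j))"]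
          by (simp add: field_simps del: of_nat_Suc)
        also have "\<dots> = fact (Suc k) / (\<Prod>l\<le>n. fact (\<gamma> l)) * (\<Prod>l\<le>n. ((cmod (x l))\<^sup>2) ^ \<gamma> l)"
          unfolding W ..
        also have "\<dots> = real (Suc k) * (fact k / (\<Prod>l\<le>n. fact (\<gamma> l)) * (\<Prod>l\<le>n. ((cmod (x l))\<^sup>2) ^ \<gamma> l))"
          by (simp only: fact_Suc) simp
        finally show ?thesis .
      qed
    qed
    also have "\<dots> = real (d i) * S ^ k"
      unfolding k S_def by (simp only: sum_distrib_left[symmetric] multinom)
    finally show ?thesis .
  qed
  have 2: "(\<Sum>\<alpha>\<in>M. (cmod (c \<alpha>))\<^sup>2 / wt n (d i) \<alpha>) \<le> (real (d i))\<^sup>2 * S ^ k * Z"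
  proof -
    have "(\<Sum>\<alpha>\<in>M. (cmod (c \<alpha>))\<^sup>2 / wt n (d i) \<alpha>)
        \<le> (\<Sum>\<alpha>\<in>M. real (d i) * (\<Sum>j\<le>n. (cmod (z j))\<^sup>2 * (real (\<alpha> j) * (cmod (R \<alpha> j))\<^sup>2 / wt n (d i) \<alpha>)))"
      by (rule sum_mono) (rule pt)
    also have "\<dots> = real (d i) * (\<Sum>j\<le>n. (cmod (z j))\<^sup>2 * (\<Sum>\<alpha>\<in>M. real (\<alpha> j) * (cmod (R \<alpha> j))\<^sup>2 / wt n (d i) \<alpha>))"
      by (simp add: sum_distrib_left sum.swap[of _ M])
    also have "\<dots> = real (d i) * (\<Sum>j\<le>n. (cmod (z j))\<^sup>2 * (real (d i) * S ^ k))"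
      using inner by simp
    also have "\<dots> = (real (d i))\<^sup>2 * S ^ k * Z"
      unfolding Z_def by (simp add: sum_distrib_left power2_eq_square mult_ac)
    finally show ?thesis .
  qed
  have S0: "S \<ge> 0" unfolding S_def by (rule sum_nonneg) simp
  have Z0: "Z \<ge> 0" unfolding Z_def by (rule sum_nonneg) simp
  have vx: "vnorm (Suc n) x = sqrt S" unfolding vnorm_def S_def sum_atMost_lessThan ..
  have vz: "vnorm (Suc n) z = sqrt Z" unfolding vnorm_def Z_def sum_atMost_lessThan ..
  have "sqrt (\<Sum>\<alpha>\<in>M. (cmod (c \<alpha>))\<^sup>2 / wt n (d i) \<alpha>) \<le> sqrt ((real (d i))\<^sup>2 * S ^ k * Z)"
    using 2 by (rule real_sqrt_le_mono)
  also have "\<dots> = real (d i) * vnorm (Suc n) x ^ (d i - 1) * vnorm (Suc n) z"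
    unfolding vx vz k by (simp add: real_sqrt_mult real_sqrt_power)
  finally have "sqrt (rn n d h i) * sqrt (\<Sum>\<alpha>\<in>M. (cmod (c \<alpha>))\<^sup>2 / wt n (d i) \<alpha>)
      \<le> sqrt (rn n d h i) * (real (d i) * vnorm (Suc n) x ^ (d i - 1) * vnorm (Suc n) z)"
    by (intro mult_left_mono) (auto simp: rn_nonneg)
  with 1 show ?thesis by (simp add: mult_ac)
qed



definition US where "US n d h x \<longleftrightarrow> (\<forall>w\<in>cspace n. \<exists>!z. z \<in> perp n x \<and> Dfapp n d h x z = w)"

lemma L2_tri:
  fixes f g :: "'a \<Rightarrow> real"
  shows "sqrt (\<Sum>i\<in>A. (f i + g i)\<^sup>2) \<le> sqrt (\<Sum>i\<in>A. (f i)\<^sup>2) + sqrt (\<Sum>i\<in>A. (g i)\<^sup>2)"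
proof (cases "finite A")
  case False
  thus ?thesis by simp
next
  case True
  thus ?thesis
  proof (induct set: finite)
    case empty
    show ?case by simp
  next
    case (insert x F)
    have nn: "0 \<le> sqrt (\<Sum>i\<in>F. (f i + g i)\<^sup>2)" "0 \<le> sqrt (\<Sum>i\<in>F. (f i)\<^sup>2)" "0 \<le> sqrt (\<Sum>i\<in>F. (g i)\<^sup>2)"
      by (simp_all add: sum_nonneg)
    have "sqrt ((f x + g x)\<^sup>2 + (sqrt (\<Sum>i\<in>F. (f i + g i)\<^sup>2))\<^sup>2) \<le>
           sqrt ((f x + g x)\<^sup>2 + (sqrt (\<Sum>i\<in>F. (f i)\<^sup>2) + sqrt (\<Sum>i\<in>F. (g i)\<^sup>2))\<^sup>2)"
      using insert nn by (intro real_sqrt_le_mono add_left_mono power_mono) auto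
    also have
      "\<dots> \<le> sqrt ((f x)\<^sup>2 + (sqrt (\<Sum>i\<in>F. (f i)\<^sup>2))\<^sup>2) + sqrt ((g x)\<^sup>2 + (sqrt (\<Sum>i\<in>F. (g i)\<^sup>2))\<^sup>2)"
      by (rule real_sqrt_sum_squares_triangle_ineq)
    finally show ?case
      using insert by (simp add: sum_nonneg)
  qed
qed

lemma vnorm_add: "vnorm N (\<lambda>j. a j + b j) \<le> vnorm N a + vnorm N b"
proof -
  have "vnorm N (\<lambda>j. a j + b j) \<le> sqrt (\<Sum>j<N. (cmod (a j) + cmod (b j))\<^sup>2)"
    unfolding vnorm_def
    by (intro real_sqrt_le_mono sum_mono power_mono norm_triangle_ineq) auto
  also have "\<dots> \<le> vnorm N a + vnorm N b" unfolding vnorm_def by (rule L2_tri)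
  finally show ?thesis .
qed

lemma vnorm_scale: "vnorm N (\<lambda>j. c * a j) = cmod c * vnorm N a"
  unfolding vnorm_def
  by (simp add: norm_mult power_mult_distrib real_sqrt_mult flip: sum_distrib_left)

lemma vnorm_diff: "vnorm N (\<lambda>j. a j - b j) \<le> vnorm N a + vnorm N b"
proof -
  have "vnorm N (\<lambda>j. a j - b j) = vnorm N (\<lambda>j. a j + (-1) * b j)" by simp
  also have "\<dots> \<le> vnorm N a + vnorm N (\<lambda>j. (-1) * b j)" by (rule vnorm_add)
  also have "vnorm N (\<lambda>j. (-1) * b j) = vnorm N b" unfolding vnorm_scale by simp
  finally show ?thesis .
qed

lemma vnorm_sum: "finite I \<Longrightarrow> vnorm N (\<lambda>j. \<Sum>i\<in>I. f i j) \<le> (\<Sum>i\<in>I. vnorm N (f i))"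
proof (induct rule: finite_induct)
  case empty
  then show ?case by (simp add: vnorm_def)
next
  case (insert a F)
  have "vnorm N (\<lambda>j. \<Sum>i\<in>insert a F. f i j) = vnorm N (\<lambda>j. f a j + (\<Sum>i\<in>F. f i j))"
    using insert by simp
  also have "\<dots> \<le> vnorm N (f a) + vnorm N (\<lambda>j. \<Sum>i\<in>F. f i j)" by (rule vnorm_add)
  also have "\<dots> \<le> vnorm N (f a) + (\<Sum>i\<in>F. vnorm N (f i))" using insert by simp
  finally show ?case using insert by simp
qed

lemma vnorm_comp: "i < N \<Longrightarrow> cmod (w i) \<le> vnorm N w"
  unfolding vnorm_def by (rule real_le_rsqrt) (rule member_le_sum, auto)

lemma vnorm_zero: "z \<in> cspace N \<Longrightarrow> vnorm N z = 0 \<Longrightarrow> z = (\<lambda>j. 0)"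
proof (rule ext)
  fix j assume z: "z \<in> cspace N" and v: "vnorm N z = 0"
  show "z j = 0"
  proof (cases "j < N")
    case True
    then show ?thesis using vnorm_comp[OF True, of z] v by simp
  next
    case False
    then show ?thesis using z by (simp add: cspace_def)
  qed
qed

lemma vnorm_zero_vec: "vnorm N (\<lambda>j. 0) = 0" by (simp add: vnorm_def)

lemma vnorm_cong: "(\<And>j. j < N \<Longrightarrow> a j = b j) \<Longrightarrow> vnorm N a = vnorm N b"
  unfolding vnorm_def by simp

lemma Dfapp_cspace: "Dfapp n d h x z \<in> cspace n"
  unfolding Dfapp_def cspace_def by simp

lemma Dfapp_zsub: "Dfapp n d h x (\<lambda>j. a j - b j) = (\<lambda>i. Dfapp n d h x a i - Dfapp n d h x b i)"
  unfolding Dfapp_def by (auto simp: algebra_simps sum_subtractf)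

lemma Dfapp_zadd: "Dfapp n d h x (\<lambda>j. a j + b j) = (\<lambda>i. Dfapp n d h x a i + Dfapp n d h x b i)"
  unfolding Dfapp_def by (auto simp: algebra_simps sum.distrib)

lemma Dfapp_zscale: "Dfapp n d h x (\<lambda>j. c * a j) = (\<lambda>i. c * Dfapp n d h x a i)"
  unfolding Dfapp_def by (auto simp: sum_distrib_left mult_ac)

lemma Dfapp_zsum: "Dfapp n d h x (\<lambda>j. \<Sum>k\<in>I. c k * b k j) = (\<lambda>i. \<Sum>k\<in>I. c k * Dfapp n d h x (b k) i)"
  unfolding Dfapp_def by (auto simp: sum_distrib_left mult_ac intro!: sum.swap)

lemma Dfapp_zero: "Dfapp n d h x (\<lambda>j. 0) = (\<lambda>i. 0)"
  unfolding Dfapp_def by (rule ext) simp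

lemma ppartial_diff: "ppartial n d (sys_diff h1 h2) i j x = ppartial n d h1 i j x - ppartial n d h2 i j x"
  unfolding ppartial_def sys_diff_def by (simp add: algebra_simps sum_subtractf)

lemma ppartial_scale: "ppartial n d (sys_scale c h) i j x = c * ppartial n d h i j x"
  unfolding ppartial_def sys_scale_def by (simp add: sum_distrib_left mult_ac)

lemma Dfapp_hdiff: "Dfapp n d (sys_diff h1 h2) x z = (\<lambda>i. Dfapp n d h1 x z i - Dfapp n d h2 x z i)"
  unfolding Dfapp_def ppartial_diff by (auto simp: algebra_simps sum_subtractf)

lemma Dfapp_hscale: "Dfapp n d (sys_scale c h) x z = (\<lambda>i. c * Dfapp n d h x z i)"
  unfolding Dfapp_def ppartial_scale by (auto simp: sum_distrib_left mult_ac)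

lemma peval_diff: "peval n d (sys_diff h1 h2) i x = peval n d h1 i x - peval n d h2 i x"
  unfolding peval_def sys_diff_def by (simp add: algebra_simps sum_subtractf)

lemma peval_scale: "peval n d (sys_scale c h) i x = c * peval n d h i x"
  unfolding peval_def sys_scale_def by (simp add: sum_distrib_left mult_ac)

lemma hinner_sub: "hinner N (\<lambda>j. a j - b j) x = hinner N a x - hinner N b x"
  unfolding hinner_def by (simp add: left_diff_distrib sum_subtractf)

lemma hinner_scale: "hinner N (\<lambda>j. c * a j) x = c * hinner N a x"
  unfolding hinner_def by (simp add: sum_distrib_left mult.assoc)

lemma hinner_sum: "hinner N (\<lambda>j. \<Sum>k\<in>I. c k * b k j) x = (\<Sum>k\<in>I. c k * hinner N (b k) x)"
  unfolding hinner_def by (simp add: sum_distrib_left sum_distrib_right mult.assoc sum.swap[of _ I])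

lemma perp_sub: "a \<in> perp n x \<Longrightarrow> b \<in> perp n x \<Longrightarrow> (\<lambda>j. a j - b j) \<in> perp n x"
  unfolding perp_def by (auto simp: hinner_sub cspace_def)

lemma perp_scale: "a \<in> perp n x \<Longrightarrow> (\<lambda>j. c * a j) \<in> perp n x"
  unfolding perp_def by (auto simp: hinner_scale cspace_def)

lemma perp_sum: "\<forall>k\<in>I. b k \<in> perp n x \<Longrightarrow> (\<lambda>j. \<Sum>k\<in>I. c k * b k j) \<in> perp n x"
  unfolding perp_def by (auto simp: hinner_sum cspace_def)

lemma perp_zero: "(\<lambda>j. 0) \<in> perp n x"
  unfolding perp_def cspace_def hinner_def by simp



lemma mat_surj:
  fixes M :: "nat \<Rightarrow> nat \<Rightarrow> complex"
  assumes inj: "\<And>z. (\<forall>i<N. (\<Sum>j<N. M i j * z j) = 0) \<Longrightarrow> (\<forall>j<N. z j = 0)"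
  shows "\<exists>z. \<forall>i<N. (\<Sum>j<N. M i j * z j) = b i"
proof -
  define A where "A = mat N N (\<lambda>(i,j). M i j)"
  have A: "A \<in> carrier_mat N N" unfolding A_def by simp
  have mv: "\<And>v i. v \<in> carrier_vec N \<Longrightarrow> i < N \<Longrightarrow> (A *\<^sub>v v) $ i = (\<Sum>j<N. M i j * v $ j)"
    unfolding A_def by (auto simp: scalar_prod_def lessThan_atLeast0 intro!: sum.cong)
  have "det A \<noteq> 0"
  proof
    assume "det A = 0"
    then obtain v where v: "v \<in> carrier_vec N" "v \<noteq> 0\<^sub>v N" "A *\<^sub>v v = 0\<^sub>v N"
      using det_0_iff_vec_prod_zero[OF A] by auto
    have "\<forall>i<N. (\<Sum>j<N. M i j * v $ j) = 0"
      using mv[OF v(1)] v(3) by (metis index_zero_vec(1))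
    from inj[OF this] have "v = 0\<^sub>v N" using v(1) by (intro eq_vecI) auto
    with v(2) show False by simp
  qed
  from det_non_zero_imp_unit[OF A this, unfolded Units_def, of "()"]
  obtain B where B: "B \<in> carrier_mat N N" and AB: "A * B = 1\<^sub>m N"
    by (auto simp: ring_mat_def)
  define w where "w = B *\<^sub>v vec N b"
  have w: "w \<in> carrier_vec N" unfolding w_def using B by simp
  have "A *\<^sub>v w = vec N b" unfolding w_def
    using assoc_mult_mat_vec[OF A B, of "vec N b"] AB by simp
  then have "\<forall>i<N. (\<Sum>j<N. M i j * w $ j) = b i"
    using mv[OF w] by (metis index_vec)
  then show ?thesis by blast
qed

lemma mat_inj:
  fixes M :: "nat \<Rightarrow> nat \<Rightarrow> complex"
  assumes surj: "\<And>b. \<exists>z. \<forall>i<N. (\<Sum>j<N. M i j * z j) = b i"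
    and z0: "\<forall>i<N. (\<Sum>j<N. M i j * z j) = 0"
  shows "\<forall>j<N. z j = 0"
proof -
  define A where "A = mat N N (\<lambda>(i,j). M i j)"
  have A: "A \<in> carrier_mat N N" unfolding A_def by simp
  have mv: "\<And>v i. v \<in> carrier_vec N \<Longrightarrow> i < N \<Longrightarrow> (A *\<^sub>v v) $ i = (\<Sum>j<N. M i j * v $ j)"
    unfolding A_def by (auto simp: scalar_prod_def lessThan_atLeast0 intro!: sum.cong)
  have mvt: "\<And>v i. v \<in> carrier_vec N \<Longrightarrow> i < N \<Longrightarrow> (transpose_mat A *\<^sub>v v) $ i = (\<Sum>j<N. M j i * v $ j)"
    unfolding A_def by (auto simp: scalar_prod_def lessThan_atLeast0 intro!: sum.cong)
  have "det A \<noteq> 0"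
  proof
    assume "det A = 0"
    then have "det (transpose_mat A) = 0" using det_transpose[OF A] by simp
    then obtain v where v: "v \<in> carrier_vec N" "v \<noteq> 0\<^sub>v N" "transpose_mat A *\<^sub>v v = 0\<^sub>v N"
      using det_0_iff_vec_prod_zero[of "transpose_mat A" N] A by auto
    have vt: "\<forall>i<N. (\<Sum>j<N. M j i * v $ j) = 0"
      using mvt[OF v(1)] v(3) by (metis index_zero_vec(1))
    obtain y where y: "\<forall>i<N. (\<Sum>j<N. M i j * y j) = cnj (v $ i)" using surj[of "\<lambda>i. cnj (v $ i)"] by blast
    have "(\<Sum>i<N. v $ i * cnj (v $ i)) = (\<Sum>i<N. v $ i * (\<Sum>j<N. M i j * y j))"
      using y by simp
    also have "\<dots> = (\<Sum>j<N. y j * (\<Sum>i<N. M i j * v $ i))"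
      unfolding sum_distrib_left by (subst sum.swap) (simp add: mult_ac)
    also have "\<dots> = 0" using vt by simp
    finally have s0: "(\<Sum>i<N. v $ i * cnj (v $ i)) = 0" .
    have "(\<Sum>i<N. v $ i * cnj (v $ i)) = of_real (\<Sum>i<N. (cmod (v $ i))\<^sup>2)"
      by (simp only: of_real_sum complex_norm_square)
    with s0 have "complex_of_real (\<Sum>i<N. (cmod (v $ i))\<^sup>2) = 0" by metis
    then have "(\<Sum>i<N. (cmod (v $ i))\<^sup>2) = 0" by (simp only: of_real_eq_0_iff)
    then have "\<forall>i<N. (cmod (v $ i))\<^sup>2 = 0"
      by (subst (asm) sum_nonneg_eq_0_iff) auto
    then have "v = 0\<^sub>v N" using v(1) by (intro eq_vecI) auto
    with v(2) show False by simp
  qed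
  from det_non_zero_imp_unit[OF A this, unfolded Units_def, of "()"]
  obtain B where B: "B \<in> carrier_mat N N" and BA: "B * A = 1\<^sub>m N"
    by (auto simp: ring_mat_def)
  define zz where "zz = vec N z"
  have zz: "zz \<in> carrier_vec N" unfolding zz_def by simp
  have "A *\<^sub>v zz = 0\<^sub>v N" using mv[OF zz] z0 unfolding zz_def
    using A by (intro eq_vecI) auto
  then have "B *\<^sub>v (A *\<^sub>v zz) = 0\<^sub>v N" using B by auto
  then have "zz = 0\<^sub>v N" using assoc_mult_mat_vec[OF B A zz] BA zz by simp
  then show ?thesis unfolding zz_def by (metis index_vec index_zero_vec(1))
qed




definition Mx where "Mx n d h x i j = (if i < n then ppartial n d h i j x else cnj (x j))"

lemma Mx_row: "i < n \<Longrightarrow> (\<Sum>j<Suc n. Mx n d h x i j * z j) = Dfapp n d h x z i"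
  unfolding Mx_def Dfapp_def by (simp add: sum_atMost_lessThan)

lemma Mx_last: "(\<Sum>j<Suc n. Mx n d h x n j * z j) = hinner (Suc n) z x"
  unfolding Mx_def hinner_def by (simp add: mult.commute)

lemma hinner_add: "hinner N (\<lambda>j. a j + b j) x = hinner N a x + hinner N b x"
  unfolding hinner_def by (simp add: distrib_right sum.distrib)

lemma hinner_self: "hinner N x x = of_real ((vnorm N x)\<^sup>2)"
  unfolding hinner_def vnorm_sq by (simp only: of_real_sum complex_norm_square)

lemma vnorm_pos: "x \<in> cspace N \<Longrightarrow> x \<noteq> (\<lambda>j. 0) \<Longrightarrow> vnorm N x > 0"
  using vnorm_nonneg[of N x] vnorm_zero[of x N] by fastforce

lemma inj_perp_US:
  assumes inj: "\<And>z. z \<in> perp n x \<Longrightarrow> Dfapp n d h x z = (\<lambda>i. 0) \<Longrightarrow> z = (\<lambda>j. 0)"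
  shows "US n d h x"
proof -
  have trunc: "(\<lambda>j. if j < Suc n then z j else 0) \<in> perp n x \<and> Dfapp n d h x (\<lambda>j. if j < Suc n then z j else 0) = w"
    if Mz: "\<forall>i<Suc n. (\<Sum>j<Suc n. Mx n d h x i j * z j) = (if i < n then w i else 0)"
      and w: "w \<in> cspace n" for z w
  proof -
    define z' where "z' = (\<lambda>j. if j < Suc n then z j else 0)"
    have eqM: "(\<Sum>j<Suc n. Mx n d h x i j * z' j) = (\<Sum>j<Suc n. Mx n d h x i j * z j)" for i
      unfolding z'_def by (rule sum.cong) auto
    have "hinner (Suc n) z' x = 0" using Mz eqM[of n] Mx_last[of n d h x z'] by simp
    then have p: "z' \<in> perp n x" unfolding perp_def cspace_def z'_def by auto
    have "Dfapp n d h x z' = w"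
    proof (rule ext)
      fix i show "Dfapp n d h x z' i = w i"
      proof (cases "i < n")
        case True
        then show ?thesis using Mz eqM[of i] Mx_row[OF True, of d h x z'] by simp
      next
        case False
        then show ?thesis using w unfolding Dfapp_def cspace_def by simp
      qed
    qed
    with p show ?thesis unfolding z'_def by simp
  qed
  have injM: "\<forall>j<Suc n. z j = 0" if M0: "\<forall>i<Suc n. (\<Sum>j<Suc n. Mx n d h x i j * z j) = 0" for z
  proof -
    have "\<forall>i<Suc n. (\<Sum>j<Suc n. Mx n d h x i j * z j) = (if i < n then (\<lambda>i. 0) i else 0)"
      using M0 by simp
    from trunc[OF this] have "(\<lambda>j. if j < Suc n then z j else 0) = (\<lambda>j. 0)"
      using inj by (simp add: cspace_def)
    then show ?thesis by (metis (mono_tags, lifting))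
  qed
  show ?thesis unfolding US_def
  proof (intro ballI)
    fix w assume w: "w \<in> cspace n"
    obtain z where Mz: "\<forall>i<Suc n. (\<Sum>j<Suc n. Mx n d h x i j * z j) = (if i < n then w i else 0)"
      using mat_surj[of "Suc n" "Mx n d h x" "\<lambda>i. if i < n then w i else 0"] injM by blast
    note tz = trunc[OF Mz w]
    show "\<exists>!z. z \<in> perp n x \<and> Dfapp n d h x z = w"
    proof (rule ex1I)
      show "(\<lambda>j. if j < Suc n then z j else 0) \<in> perp n x \<and> Dfapp n d h x (\<lambda>j. if j < Suc n then z j else 0) = w"
        by (rule tz)
      fix y assume y: "y \<in> perp n x \<and> Dfapp n d h x y = w"
      have "(\<lambda>j. y j - (if j < Suc n then z j else 0)) \<in> perp n x"
        using y tz by (intro perp_sub) auto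
      moreover have "Dfapp n d h x (\<lambda>j. y j - (if j < Suc n then z j else 0)) = (\<lambda>i. 0)"
        unfolding Dfapp_zsub using y tz by simp
      ultimately have "(\<lambda>j. y j - (if j < Suc n then z j else 0)) = (\<lambda>j. 0)" by (rule inj)
      then show "y = (\<lambda>j. if j < Suc n then z j else 0)"
        by (metis (mono_tags, lifting) eq_iff_diff_eq_0)
    qed
  qed
qed

lemma surj_perp_US:
  assumes surj: "Dfapp n d h x ` perp n x = cspace n" and xC: "x \<in> cspace (Suc n)"
    and xnz: "x \<noteq> (\<lambda>j. 0)"
  shows "US n d h x"
proof (rule inj_perp_US)
  fix z assume zp: "z \<in> perp n x" and z0: "Dfapp n d h x z = (\<lambda>i. 0)"
  have surjM: "\<exists>z. \<forall>i<Suc n. (\<Sum>j<Suc n. Mx n d h x i j * z j) = b i" for b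
  proof -
    define r2 where "r2 = (vnorm (Suc n) x)\<^sup>2"
    have r2: "r2 > 0" unfolding r2_def using vnorm_pos[OF xC xnz] by simp
    define c where "c = b n / of_real r2"
    define t where "t = (\<lambda>i. if i < n then b i - c * Dfapp n d h x x i else 0)"
    have "t \<in> cspace n" unfolding t_def cspace_def by simp
    then obtain z0 where z0: "z0 \<in> perp n x" "Dfapp n d h x z0 = t" using surj
      by (metis (no_types, lifting) imageE)
    define zz where "zz = (\<lambda>j. z0 j + c * x j)"
    have "(\<Sum>j<Suc n. Mx n d h x i j * zz j) = b i" if i: "i < Suc n" for i
    proof (cases "i < n")
      case True
      have "(\<Sum>j<Suc n. Mx n d h x i j * zz j) = Dfapp n d h x zz i" by (rule Mx_row[OF True])
      also have "\<dots> = t i + c * Dfapp n d h x x i"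
        unfolding zz_def Dfapp_zadd Dfapp_zscale z0(2) ..
      also have "\<dots> = b i" unfolding t_def using True by simp
      finally show ?thesis .
    next
      case False
      then have "i = n" using i by simp
      have "(\<Sum>j<Suc n. Mx n d h x n j * zz j) = hinner (Suc n) zz x" by (rule Mx_last)
      also have "\<dots> = hinner (Suc n) z0 x + c * hinner (Suc n) x x"
        unfolding zz_def hinner_add hinner_scale ..
      also have "\<dots> = b n" using z0(1) r2 unfolding hinner_self c_def r2_def[symmetric] perp_def
        by simp
      finally show ?thesis using \<open>i = n\<close> by simp
    qed
    then show ?thesis by blast
  qed
  have "\<forall>i<Suc n. (\<Sum>j<Suc n. Mx n d h x i j * z j) = 0"
  proof (intro allI impI)
    fix i assume i: "i < Suc n"
    show "(\<Sum>j<Suc n. Mx n d h x i j * z j) = 0"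
    proof (cases "i < n")
      case True
      then show ?thesis using Mx_row[OF True, of d h x z] z0 by simp
    next
      case False
      then have "i = n" using i by simp
      then show ?thesis using Mx_last[of n d h x z] zp unfolding perp_def by simp
    qed
  qed
  from mat_inj[where M = "Mx n d h x" and N = "Suc n", OF surjM this]
  have "\<forall>j<Suc n. z j = 0" .
  with zp show "z = (\<lambda>j. 0)" unfolding perp_def cspace_def
    by (intro ext) (metis (mono_tags, lifting) mem_Collect_eq not_le)
qed



definition sc where "sc n d x i = sqrt (real (d i)) * vnorm (Suc n) x ^ (d i - 1)"
definition Dl where "Dl n d x w = (\<lambda>i. if i < n then complex_of_real (sc n d x i) * w i else 0)"
definition Dinv where "Dinv n d x u = (\<lambda>i. if i < n then u i / complex_of_real (sc n d x i) else 0)"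
definition Bset where "Bset n d h x = {vnorm (Suc n) (rinv n d h x (Dl n d x w)) | w. w \<in> cspace n \<and> vnorm n w \<le> 1}"

lemma mu_eq: "mu n d h x = bw_norm n d h * Sup (Bset n d h x)"
  unfolding mu_def opnorm_def Bset_def Dl_def sc_def ..

lemma rinv_prop:
  assumes "US n d h x" "w \<in> cspace n"
  shows "rinv n d h x w \<in> perp n x \<and> Dfapp n d h x (rinv n d h x w) = w"
proof -
  have "\<exists>!z. z \<in> perp n x \<and> Dfapp n d h x z = w" using assms unfolding US_def by blast
  then show ?thesis unfolding rinv_def by (rule theI')
qed

lemma rinv_eq:
  assumes "US n d h x" "z \<in> perp n x" "Dfapp n d h x z = w"
  shows "rinv n d h x w = z"
proof -
  have "w \<in> cspace n" using assms(3) Dfapp_cspace by metis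
  then have "\<exists>!z. z \<in> perp n x \<and> Dfapp n d h x z = w" using assms unfolding US_def by blast
  then show ?thesis unfolding rinv_def using assms by (intro the1_equality) auto
qed

lemma Dl_cspace: "Dl n d x w \<in> cspace n" unfolding Dl_def cspace_def by simp
lemma Dinv_cspace: "Dinv n d x w \<in> cspace n" unfolding Dinv_def cspace_def by simp

lemma Dinv_Dl: "w \<in> cspace n \<Longrightarrow> \<forall>i<n. sc n d x i > 0 \<Longrightarrow> Dinv n d x (Dl n d x w) = w"
  unfolding Dinv_def Dl_def cspace_def by (rule ext) auto

lemma Dl_Dinv: "u \<in> cspace n \<Longrightarrow> \<forall>i<n. sc n d x i > 0 \<Longrightarrow> Dl n d x (Dinv n d x u) = u"
  unfolding Dinv_def Dl_def cspace_def by (rule ext) auto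

lemma Dl_scale: "Dl n d x (\<lambda>i. c * w i) = (\<lambda>i. c * Dl n d x w i)"
  unfolding Dl_def by (rule ext) simp

lemma Dinv_scale: "Dinv n d x (\<lambda>i. c * w i) = (\<lambda>i. c * Dinv n d x w i)"
  unfolding Dinv_def by (rule ext) simp

lemma Dinv_sub: "Dinv n d x (\<lambda>i. a i - b i) = (\<lambda>i. Dinv n d x a i - Dinv n d x b i)"
  unfolding Dinv_def by (rule ext) (simp add: diff_divide_distrib)

lemma Dinv_add: "Dinv n d x (\<lambda>i. a i + b i) = (\<lambda>i. Dinv n d x a i + Dinv n d x b i)"
  unfolding Dinv_def by (rule ext) (simp add: add_divide_distrib)

lemma Bset_bdd:
  assumes US: "US n d h x"
  shows "bdd_above (Bset n d h x)"
proof -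
  define e where "e k = (\<lambda>i::nat. if i = k then (1::complex) else 0)" for k :: nat
  define b where "b k = rinv n d h x (Dl n d x (e k))" for k
  have b: "b k \<in> perp n x \<and> Dfapp n d h x (b k) = Dl n d x (e k)" for k
    unfolding b_def by (rule rinv_prop[OF US Dl_cspace])
  have "v \<le> (\<Sum>k<n. vnorm (Suc n) (b k))" if "v \<in> Bset n d h x" for v
  proof -
    obtain w where v: "v = vnorm (Suc n) (rinv n d h x (Dl n d x w))" and w: "w \<in> cspace n" "vnorm n w \<le> 1"
      using \<open>v \<in> Bset n d h x\<close> unfolding Bset_def by blast
    have "rinv n d h x (Dl n d x w) = (\<lambda>j. \<Sum>k<n. w k * b k j)"
    proof (rule rinv_eq[OF US])
      show "(\<lambda>j. \<Sum>k<n. w k * b k j) \<in> perp n x" using b by (intro perp_sum) auto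
      show "Dfapp n d h x (\<lambda>j. \<Sum>k<n. w k * b k j) = Dl n d x w"
        unfolding Dfapp_zsum
      proof (rule ext)
        fix i
        have "(\<Sum>k<n. w k * Dfapp n d h x (b k) i) = (\<Sum>k<n. w k * Dl n d x (e k) i)" using b by simp
        also have "\<dots> = Dl n d x w i"
        proof (cases "i < n")
          case True
          have "(\<Sum>k<n. w k * Dl n d x (e k) i) = (\<Sum>k<n. if k = i then w k * complex_of_real (sc n d x i) else 0)"
            by (intro sum.cong refl) (auto simp: Dl_def e_def True)
          also have "\<dots> = w i * complex_of_real (sc n d x i)" using True by simp
          finally show ?thesis unfolding Dl_def using True by (simp add: mult.commute)
        next
          case False
          then show ?thesis unfolding Dl_def by simp
        qed
        finally show "(\<Sum>k<n. w k * Dfapp n d h x (b k) i) = Dl n d x w i" .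
      qed
    qed
    then have "v = vnorm (Suc n) (\<lambda>j. \<Sum>k<n. w k * b k j)" using v by simp
    also have "\<dots> \<le> (\<Sum>k<n. vnorm (Suc n) (\<lambda>j. w k * b k j))" by (rule vnorm_sum) simp
    also have "\<dots> = (\<Sum>k<n. cmod (w k) * vnorm (Suc n) (b k))" by (simp add: vnorm_scale)
    also have "\<dots> \<le> (\<Sum>k<n. 1 * vnorm (Suc n) (b k))"
    proof (rule sum_mono)
      fix k assume "k \<in> {..<n}"
      then have "cmod (w k) \<le> 1" using vnorm_comp[of k n w] w(2) by simp
      then show "cmod (w k) * vnorm (Suc n) (b k) \<le> 1 * vnorm (Suc n) (b k)"
        by (intro mult_right_mono vnorm_nonneg)
    qed
    finally show ?thesis by simp
  qed
  then show ?thesis by (rule bdd_aboveI)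
qed

lemma Bset_mem: "w \<in> cspace n \<Longrightarrow> vnorm n w \<le> 1 \<Longrightarrow> vnorm (Suc n) (rinv n d h x (Dl n d x w)) \<in> Bset n d h x"
  unfolding Bset_def by blast

lemma Sup_upper:
  assumes "US n d h x" "w \<in> cspace n" "vnorm n w \<le> 1"
  shows "vnorm (Suc n) (rinv n d h x (Dl n d x w)) \<le> Sup (Bset n d h x)"
  by (rule cSup_upper[OF Bset_mem[OF assms(2,3)] Bset_bdd[OF assms(1)]])

lemma Sup_least:
  assumes "\<And>w. w \<in> cspace n \<Longrightarrow> vnorm n w \<le> 1 \<Longrightarrow> vnorm (Suc n) (rinv n d h x (Dl n d x w)) \<le> B"
  shows "Sup (Bset n d h x) \<le> B"
proof (rule cSup_least)
  have "(\<lambda>j. 0) \<in> cspace n" "vnorm n (\<lambda>j. 0) \<le> 1" by (auto simp: cspace_def vnorm_zero_vec)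
  then show "Bset n d h x \<noteq> {}" using Bset_mem by blast
  show "\<And>v. v \<in> Bset n d h x \<Longrightarrow> v \<le> B" unfolding Bset_def using assms by blast
qed

lemma Sup_nonneg:
  assumes "US n d h x"
  shows "0 \<le> Sup (Bset n d h x)"
proof -
  have "vnorm (Suc n) (rinv n d h x (Dl n d x (\<lambda>j. 0))) \<le> Sup (Bset n d h x)"
    by (rule Sup_upper[OF assms]) (auto simp: cspace_def vnorm_zero_vec)
  then show ?thesis using vnorm_nonneg[of "Suc n"] by (meson order_trans)
qed

lemma lower:
  assumes US: "US n d h x" and pos: "\<forall>i<n. sc n d x i > 0" and z: "z \<in> perp n x"
  shows "vnorm (Suc n) z \<le> Sup (Bset n d h x) * vnorm n (Dinv n d x (Dfapp n d h x z))"
proof -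
  define u where "u = Dinv n d x (Dfapp n d h x z)"
  have u: "u \<in> cspace n" unfolding u_def by (rule Dinv_cspace)
  have Du: "Dl n d x u = Dfapp n d h x z" unfolding u_def by (rule Dl_Dinv[OF Dfapp_cspace pos])
  show ?thesis
  proof (cases "vnorm n u = 0")
    case True
    then have "u = (\<lambda>j. 0)" by (rule vnorm_zero[OF u])
    then have "Dl n d x u = (\<lambda>i. 0)" unfolding Dl_def by (intro ext) simp
    then have "Dfapp n d h x z = (\<lambda>i. 0)" using Du by simp
    then have "rinv n d h x (\<lambda>i. 0) = z" by (rule rinv_eq[OF US z])
    moreover have "rinv n d h x (\<lambda>i. 0) = (\<lambda>j. 0)" by (rule rinv_eq[OF US perp_zero Dfapp_zero])
    ultimately have "z = (\<lambda>j. 0)" by simp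
    then show ?thesis using Sup_nonneg[OF US] vnorm_nonneg[of n] by (simp add: vnorm_zero_vec)
  next
    case False
    then have nu: "vnorm n u > 0" using vnorm_nonneg[of n u] by simp
    define w where "w = (\<lambda>i. complex_of_real (1 / vnorm n u) * u i)"
    have wc: "w \<in> cspace n" using u unfolding w_def cspace_def by simp
    have wn: "vnorm n w = 1" unfolding w_def vnorm_scale using nu by (simp add: norm_divide)
    have "rinv n d h x (Dl n d x w) = (\<lambda>j. complex_of_real (1 / vnorm n u) * z j)"
      by (rule rinv_eq[OF US perp_scale[OF z]]) (simp only: w_def Dl_scale Dfapp_zscale Du)
    then have "vnorm (Suc n) (\<lambda>j. complex_of_real (1 / vnorm n u) * z j) \<le> Sup (Bset n d h x)"
      using Sup_upper[OF US wc] wn by simp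
    then have "vnorm (Suc n) z / vnorm n u \<le> Sup (Bset n d h x)"
      unfolding vnorm_scale using nu by (simp add: norm_divide)
    then show ?thesis using nu unfolding u_def by (simp add: pos_divide_le_eq)
  qed
qed

lemma sc_pos: "1 \<le> d i \<Longrightarrow> vnorm (Suc n) x > 0 \<Longrightarrow> sc n d x i > 0"
  unfolding sc_def by simp

lemma Dinv_cmod: "i < n \<Longrightarrow> sc n d x i > 0 \<Longrightarrow> cmod (Dinv n d x u i) = cmod (u i) / sc n d x i"
  unfolding Dinv_def by (simp add: norm_divide)

lemma rowsum:
  assumes "\<forall>i<n. cmod (u i) \<le> K * sqrt (rn n d h i)" "0 \<le> K"
  shows "vnorm n u \<le> K * bw_norm n d h"
proof -
  have "vnorm n u \<le> sqrt (\<Sum>i<n. K\<^sup>2 * rn n d h i)"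
    unfolding vnorm_def
  proof (intro real_sqrt_le_mono sum_mono)
    fix i assume "i \<in> {..<n}"
    then have "(cmod (u i))\<^sup>2 \<le> (K * sqrt (rn n d h i))\<^sup>2" using assms by (intro power_mono) auto
    then show "(cmod (u i))\<^sup>2 \<le> K\<^sup>2 * rn n d h i" by (simp add: power_mult_distrib rn_nonneg)
  qed
  also have "\<dots> = K * sqrt (\<Sum>i<n. rn n d h i)"
    using assms(2) by (simp add: real_sqrt_mult flip: sum_distrib_left)
  also have "sqrt (\<Sum>i<n. rn n d h i) = bw_norm n d h"
    using bw_norm_sq[of n d h] bw_norm_nonneg[of n d h] by (metis real_sqrt_unique)
  finally show ?thesis .
qed

lemma B1:
  assumes dd: "\<forall>i<n. 1 \<le> d i \<and> d i \<le> D" and r: "vnorm (Suc n) x > 0"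
  shows "vnorm n (Dinv n d x (Dfapp n d h x z)) \<le> sqrt (real D) * vnorm (Suc n) z * bw_norm n d h"
proof (rule rowsum)
  show "0 \<le> sqrt (real D) * vnorm (Suc n) z" by (simp add: vnorm_nonneg)
  show "\<forall>i<n. cmod (Dinv n d x (Dfapp n d h x z) i) \<le> sqrt (real D) * vnorm (Suc n) z * sqrt (rn n d h i)"
  proof (intro allI impI)
    fix i assume i: "i < n"
    define R where "R = vnorm (Suc n) x ^ (d i - 1)"
    have R: "R > 0" unfolding R_def using r by simp
    have di: "real (d i) > 0" "real (d i) \<le> real D" using dd i by auto
    have sq: "real (d i) = sqrt (real (d i)) * sqrt (real (d i))" using di by simp
    have scp: "sc n d x i > 0" using sc_pos[of d i n x] dd i r by simp
    have "cmod (Dinv n d x (Dfapp n d h x z) i) = cmod (Dfapp n d h x z i) / (sqrt (real (d i)) * R)"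
      unfolding Dinv_cmod[OF i scp] unfolding sc_def R_def ..
    also have "\<dots> \<le> (real (d i) * sqrt (rn n d h i) * R * vnorm (Suc n) z) / (sqrt (real (d i)) * R)"
      using deriv_bound[of d i n h x z] dd i R di unfolding R_def
      by (intro divide_right_mono) auto
    also have "\<dots> = sqrt (real (d i)) * vnorm (Suc n) z * sqrt (rn n d h i)"
      using R di by (subst sq) (simp add: field_simps)
    also have "\<dots> \<le> sqrt (real D) * vnorm (Suc n) z * sqrt (rn n d h i)"
      using di by (intro mult_right_mono) (auto simp: vnorm_nonneg rn_nonneg)
    finally show "cmod (Dinv n d x (Dfapp n d h x z) i) \<le> sqrt (real D) * vnorm (Suc n) z * sqrt (rn n d h i)" .
  qed
qed

lemma B2:
  assumes dd: "\<forall>i<n. 1 \<le> d i \<and> d i \<le> D" and r: "vnorm (Suc n) x > 0"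
  shows "vnorm n (Dinv n d x (\<lambda>i. if i < n then of_nat (d i) * peval n d h i x else 0))
     \<le> sqrt (real D) * vnorm (Suc n) x * bw_norm n d h"
proof (rule rowsum)
  show "0 \<le> sqrt (real D) * vnorm (Suc n) x" by (simp add: vnorm_nonneg)
  show "\<forall>i<n. cmod (Dinv n d x (\<lambda>i. if i < n then of_nat (d i) * peval n d h i x else 0) i)
      \<le> sqrt (real D) * vnorm (Suc n) x * sqrt (rn n d h i)"
  proof (intro allI impI)
    fix i assume i: "i < n"
    define R where "R = vnorm (Suc n) x ^ (d i - 1)"
    have R: "R > 0" unfolding R_def using r by simp
    have di: "real (d i) > 0" "real (d i) \<le> real D" using dd i by auto
    have sq: "real (d i) = sqrt (real (d i)) * sqrt (real (d i))" using di by simp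
    have pw: "vnorm (Suc n) x ^ d i = vnorm (Suc n) x * R"
      unfolding R_def using dd i by (metis Suc_diff_le diff_Suc_1 power_Suc)
    have scp: "sc n d x i > 0" using sc_pos[of d i n x] dd i r by simp
    have "cmod (Dinv n d x (\<lambda>i. if i < n then of_nat (d i) * peval n d h i x else 0) i)
        = real (d i) * cmod (peval n d h i x) / (sqrt (real (d i)) * R)"
      unfolding Dinv_cmod[OF i scp] unfolding sc_def R_def using i by (simp add: norm_mult)
    also have "\<dots> \<le> real (d i) * (sqrt (rn n d h i) * (vnorm (Suc n) x * R)) / (sqrt (real (d i)) * R)"
      using eval_bound[of n d h i x] R di unfolding pw
      by (intro divide_right_mono mult_left_mono) auto
    also have "\<dots> = sqrt (real (d i)) * vnorm (Suc n) x * sqrt (rn n d h i)"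
      using R di by (subst sq) (simp add: field_simps)
    also have "\<dots> \<le> sqrt (real D) * vnorm (Suc n) x * sqrt (rn n d h i)"
      using di by (intro mult_right_mono) (auto simp: vnorm_nonneg rn_nonneg)
    finally show "cmod (Dinv n d x (\<lambda>i. if i < n then of_nat (d i) * peval n d h i x else 0) i)
      \<le> sqrt (real D) * vnorm (Suc n) x * sqrt (rn n d h i)" .
  qed
qed



lemma bw_norm_pos:
  assumes H: "in_Hd n d f" and nz: "f \<noteq> (\<lambda>i \<alpha>. 0)"
  shows "bw_norm n d f > 0"
proof (rule ccontr)
  assume "\<not> bw_norm n d f > 0"
  then have "bw_norm n d f = 0" using bw_norm_nonneg[of n d f] by simp
  then have "(\<Sum>i<n. rn n d f i) = 0" using bw_norm_sq[of n d f] by simp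
  then have r0: "\<forall>i\<in>{..<n}. rn n d f i = 0" by (subst (asm) sum_nonneg_eq_0_iff) (auto simp: rn_nonneg)
  have "f i \<alpha> = 0" for i \<alpha>
  proof (cases "i < n \<and> \<alpha> \<in> mons n (d i)")
    case True
    then have "rn n d f i = 0" using r0 by simp
    then have "\<forall>\<beta>\<in>mons n (d i). wt n (d i) \<beta> * (cmod (f i \<beta>))\<^sup>2 = 0"
      unfolding rn_def using wt_pos by (subst (asm) sum_nonneg_eq_0_iff) (auto simp: finite_mons less_imp_le)
    then show ?thesis using True wt_pos[of n "d i" \<alpha>] by fastforce
  next
    case False
    then show ?thesis using H unfolding in_Hd_def by auto
  qed
  then have "f = (\<lambda>i \<alpha>. 0)" by (intro ext)
  then show False using nz by simp
qed

lemma d_ge1: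
  assumes rk: "rank_full n d f x" and i: "i < n"
  shows "1 \<le> d i"
proof (rule ccontr)
  assume "\<not> 1 \<le> d i"
  then have d0: "d i = 0" by simp
  have "Dfapp n d f x z i = 0" for z
    unfolding Dfapp_def ppartial_def d0 mons_0 using i by simp
  moreover have "(\<lambda>k. if k = i then (1::complex) else 0) \<in> cspace n" using i unfolding cspace_def by simp
  then obtain z where "Dfapp n d f x z = (\<lambda>k. if k = i then (1::complex) else 0)"
    using rk unfolding rank_full_def by (metis imageE)
  ultimately show False by (metis one_neq_zero)
qed

lemma dR_nonneg: "0 \<le> dR n x y"
proof -
  define q where "q = cmod (hinner (Suc n) x y) / (vnorm (Suc n) x * vnorm (Suc n) y)"
  have cs: "cmod (hinner (Suc n) x y) \<le> vnorm (Suc n) x * vnorm (Suc n) y"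
  proof -
    have "cmod (hinner (Suc n) x y) \<le> (\<Sum>j<Suc n. cmod (x j) * cmod (y j))"
      unfolding hinner_def by (rule order_trans[OF norm_sum]) (simp add: norm_mult)
    also have "\<dots> \<le> sqrt ((\<Sum>j<Suc n. (cmod (x j))\<^sup>2) * (\<Sum>j<Suc n. (cmod (y j))\<^sup>2))"
      by (rule real_le_rsqrt) (rule CS_sum)
    also have "\<dots> = vnorm (Suc n) x * vnorm (Suc n) y" unfolding vnorm_def by (simp add: real_sqrt_mult)
    finally show ?thesis .
  qed
  have "0 \<le> q" unfolding q_def by (simp add: vnorm_nonneg)
  moreover have "q \<le> 1"
  proof (cases "vnorm (Suc n) x * vnorm (Suc n) y = 0")
    case True then show ?thesis unfolding q_def True by simp
  next
    case False
    then have "vnorm (Suc n) x * vnorm (Suc n) y > 0" using vnorm_nonneg[of "Suc n"]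
      by (simp add: less_le)
    then show ?thesis unfolding q_def using cs by simp
  qed
  ultimately show ?thesis unfolding dR_def q_def[symmetric] by (intro arccos_lbound) auto
qed


theorem lemma11:
  fixes n :: nat and d :: "nat \<Rightarrow> nat"
    and f g :: "nat \<Rightarrow> (nat \<Rightarrow> nat) \<Rightarrow> complex"
    and x y :: "nat \<Rightarrow> complex"
  assumes n: "n \<ge> 1"
    and D2: "Dmax n d \<ge> 2"
    and Hf: "in_Hd n d f" and Hg: "in_Hd n d g"
    and fnz: "f \<noteq> (\<lambda>i \<alpha>. 0)" and gnz: "g \<noteq> (\<lambda>i \<alpha>. 0)"
    and xC: "x \<in> cspace (Suc n)" and yC: "y \<in> cspace (Suc n)"
    and xnz: "x \<noteq> (\<lambda>j. 0)" and ynz: "y \<noteq> (\<lambda>j. 0)"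
    and rk: "rank_full n d f x"
    and v1: "sqrt (real (Dmax n d)) * mu n d f x *
        bw_norm n d (sys_diff (sys_scale (of_real (1 / bw_norm n d f)) f)
                              (sys_scale (of_real (1 / bw_norm n d g)) g)) < 1"
  shows "let D = real (Dmax n d);
             v = sqrt D * mu n d f x *
               bw_norm n d (sys_diff (sys_scale (of_real (1 / bw_norm n d f)) f)
                                     (sys_scale (of_real (1 / bw_norm n d g)) g));
             u = D powr (3/2) / 2 * mu n d f x * dR n x y;
             ug = D powr (3/2) / 2 * mu n d g x * dR n x y
         in (1 - v) * ug \<le> u \<and> u \<le> (1 + v) * ug \<and>
            (1 - v) * delta n d g x - v \<le> delta n d f x \<and>
            delta n d f x \<le> (1 + v) * delta n d g x + v"
proof -
  define DD where "DD = Dmax n d"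
  have dleD: "d i \<le> DD" if "i < n" for i
    unfolding DD_def Dmax_def by (rule Max_ge) (use that in auto)
  have d1: "1 \<le> d i" if "i < n" for i by (rule d_ge1[OF rk that])
  have dd: "\<forall>i<n. 1 \<le> d i \<and> d i \<le> DD" using dleD d1 by auto
  define r where "r = vnorm (Suc n) x"
  have r: "r > 0" unfolding r_def by (rule vnorm_pos[OF xC xnz])
  have pos: "\<forall>i<n. sc n d x i > 0"
  proof (intro allI impI)
    fix i assume i: "i < n"
    show "sc n d x i > 0" using sc_pos[of d i n x] d1[OF i] r unfolding r_def by simp
  qed
  have USf: "US n d f x" by (rule surj_perp_US[OF rk[unfolded rank_full_def] xC xnz])
  define nf where "nf = bw_norm n d f"
  define ng where "ng = bw_norm n d g"
  have nf: "nf > 0" unfolding nf_def by (rule bw_norm_pos[OF Hf fnz])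
  have ng: "ng > 0" unfolding ng_def by (rule bw_norm_pos[OF Hg gnz])
  define fh where "fh = sys_scale (of_real (1 / nf)) f"
  define gh where "gh = sys_scale (of_real (1 / ng)) g"
  define e where "e = sys_diff fh gh"
  define E where "E = bw_norm n d e"
  have E0: "E \<ge> 0" unfolding E_def by (rule bw_norm_nonneg)
  define eps where "eps = sqrt (real DD) * E"
  have eps0: "eps \<ge> 0" unfolding eps_def using E0 by simp
  define mf where "mf = Sup (Bset n d f x)"
  define mg where "mg = Sup (Bset n d g x)"
  define muf where "muf = nf * mf"
  have muf: "mu n d f x = muf" unfolding muf_def mf_def nf_def by (rule mu_eq)
  have muf0: "muf \<ge> 0" unfolding muf_def mf_def using nf Sup_nonneg[OF USf] by simp
  define v where "v = sqrt (real DD) * muf * E"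
  have v_eq: "v = muf * eps" unfolding v_def eps_def by simp
  have v1': "v < 1" using v1 unfolding v_def E_def e_def fh_def gh_def nf_def ng_def DD_def muf[symmetric] by simp
  have v0: "v \<ge> 0" unfolding v_eq using muf0 eps0 by simp
  let ?A = "\<lambda>h z. Dinv n d x (Dfapp n d h x z)"
  have Afh: "?A f z = (\<lambda>i. complex_of_real nf * ?A fh z i)" for z
    unfolding fh_def Dfapp_hscale Dinv_scale using nf by (intro ext) (simp add: Dinv_def)
  have Agh: "?A g z = (\<lambda>i. complex_of_real ng * ?A gh z i)" for z
    unfolding gh_def Dfapp_hscale Dinv_scale using ng by (intro ext) (simp add: Dinv_def)
  have Ae: "?A e z = (\<lambda>i. ?A fh z i - ?A gh z i)" for z
    unfolding e_def Dfapp_hdiff Dinv_sub ..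
  have Ae_bound: "vnorm n (?A e z) \<le> eps * vnorm (Suc n) z" for z
    using B1[OF dd, of x e z] r unfolding r_def eps_def E_def by (simp add: mult_ac)
  have tri1: "vnorm n (?A fh z) \<le> vnorm n (?A gh z) + vnorm n (?A e z)" for z
  proof -
    have "?A fh z = (\<lambda>i. ?A gh z i + ?A e z i)" unfolding Ae by simp
    then show ?thesis using vnorm_add[of n "?A gh z" "?A e z"] by simp
  qed
  have tri2: "vnorm n (?A gh z) \<le> vnorm n (?A fh z) + vnorm n (?A e z)" for z
  proof -
    have "?A gh z = (\<lambda>i. ?A fh z i - ?A e z i)" unfolding Ae by simp
    then show ?thesis using vnorm_diff[of n "?A fh z" "?A e z"] by simp
  qed
  have lowf: "vnorm (Suc n) z \<le> muf * vnorm n (?A fh z)" if z: "z \<in> perp n x" for z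
  proof -
    have "vnorm (Suc n) z \<le> mf * vnorm n (?A f z)" unfolding mf_def by (rule lower[OF USf pos z])
    also have "vnorm n (?A f z) = nf * vnorm n (?A fh z)" unfolding Afh vnorm_scale using nf by simp
    finally show ?thesis unfolding muf_def by (simp add: mult_ac)
  qed
  have F4: "(1 - v) * vnorm (Suc n) z \<le> muf * vnorm n (?A gh z)" if z: "z \<in> perp n x" for z
  proof -
    have "vnorm (Suc n) z \<le> muf * (vnorm n (?A gh z) + eps * vnorm (Suc n) z)"
      using lowf[OF z] tri1[of z] Ae_bound[of z] muf0
      by (meson add_left_mono mult_left_mono order_trans)
    then show ?thesis unfolding v_eq by (simp add: algebra_simps)
  qed
  have USg: "US n d g x"
  proof (rule inj_perp_US)
    fix z assume z: "z \<in> perp n x" and g0: "Dfapp n d g x z = (\<lambda>i. 0)"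
    have "?A gh z = (\<lambda>i. 0)"
      unfolding gh_def Dfapp_hscale g0 Dinv_def by (intro ext) simp
    then have "(1 - v) * vnorm (Suc n) z \<le> 0" using F4[OF z] by (simp add: vnorm_zero_vec)
    then have "vnorm (Suc n) z = 0" using v1' vnorm_nonneg[of "Suc n" z]
      by (simp add: mult_le_0_iff)
    moreover have "z \<in> cspace (Suc n)" using z unfolding perp_def by simp
    ultimately show "z = (\<lambda>j. 0)" using vnorm_zero by blast
  qed
  define mug where "mug = ng * mg"
  have mug: "mu n d g x = mug" unfolding mug_def mg_def ng_def by (rule mu_eq)
  have mug0: "mug \<ge> 0" unfolding mug_def mg_def using ng Sup_nonneg[OF USg] by simp
  have lowg: "vnorm (Suc n) z \<le> mug * vnorm n (?A gh z)" if z: "z \<in> perp n x" for z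
  proof -
    have "vnorm (Suc n) z \<le> mg * vnorm n (?A g z)" unfolding mg_def by (rule lower[OF USg pos z])
    also have "vnorm n (?A g z) = ng * vnorm n (?A gh z)" unfolding Agh vnorm_scale using ng by simp
    finally show ?thesis unfolding mug_def by (simp add: mult_ac)
  qed
  have solf: "?A fh (rinv n d f x (Dl n d x w)) = (\<lambda>i. complex_of_real (1 / nf) * w i)"
    if w: "w \<in> cspace n" for w
  proof -
    have "Dfapp n d f x (rinv n d f x (Dl n d x w)) = Dl n d x w" using rinv_prop[OF USf Dl_cspace] by blast
    then show ?thesis unfolding fh_def Dfapp_hscale Dinv_scale using Dinv_Dl[OF w pos] by simp
  qed
  have solg: "?A gh (rinv n d g x (Dl n d x w)) = (\<lambda>i. complex_of_real (1 / ng) * w i)"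
    if w: "w \<in> cspace n" for w
  proof -
    have "Dfapp n d g x (rinv n d g x (Dl n d x w)) = Dl n d x w" using rinv_prop[OF USg Dl_cspace] by blast
    then show ?thesis unfolding gh_def Dfapp_hscale Dinv_scale using Dinv_Dl[OF w pos] by simp
  qed
  have G1: "(1 - v) * mug \<le> muf"
  proof -
    have "mg \<le> muf / ((1 - v) * ng)" unfolding mg_def
    proof (rule Sup_least)
      fix w assume w: "w \<in> cspace n" "vnorm n w \<le> 1"
      define z where "z = rinv n d g x (Dl n d x w)"
      have z: "z \<in> perp n x" unfolding z_def using rinv_prop[OF USg Dl_cspace] by blast
      have "(1 - v) * vnorm (Suc n) z \<le> muf * vnorm n (?A gh z)" by (rule F4[OF z])
      also have "vnorm n (?A gh z) = vnorm n w / ng" unfolding z_def solg[OF w(1)] vnorm_scale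
        using ng by (simp add: norm_divide)
      also have "\<dots> \<le> 1 / ng" using w(2) ng by (simp add: divide_right_mono)
      finally have "(1 - v) * vnorm (Suc n) z \<le> muf * (1 / ng)" using muf0
        by (meson mult_left_mono order_trans)
      then show "vnorm (Suc n) (rinv n d g x (Dl n d x w)) \<le> muf / ((1 - v) * ng)"
        unfolding z_def[symmetric] using v1' ng by (simp add: field_simps)
    qed
    then show ?thesis unfolding mug_def using v1' ng by (simp add: field_simps)
  qed
  have G2: "muf \<le> (1 + v) * mug"
  proof -
    have "mf \<le> (1 + v) * mug / nf" unfolding mf_def
    proof (rule Sup_least)
      fix w assume w: "w \<in> cspace n" "vnorm n w \<le> 1"
      define z where "z = rinv n d f x (Dl n d x w)"
      have z: "z \<in> perp n x" unfolding z_def using rinv_prop[OF USf Dl_cspace] by blast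
      have zmf: "vnorm (Suc n) z \<le> mf" unfolding z_def mf_def by (rule Sup_upper[OF USf w])
      have Af: "vnorm n (?A fh z) \<le> 1 / nf" unfolding z_def solf[OF w(1)] vnorm_scale
        using nf w(2) by (simp add: divide_right_mono norm_divide)
      have "vnorm (Suc n) z \<le> mug * vnorm n (?A gh z)" by (rule lowg[OF z])
      also have "\<dots> \<le> mug * (1 / nf + eps * vnorm (Suc n) z)"
        using tri2[of z] Af Ae_bound[of z] mug0
        by (intro mult_left_mono) auto
      finally have h: "vnorm (Suc n) z \<le> mug * (1 / nf + eps * vnorm (Suc n) z)" .
      have "nf * vnorm (Suc n) z \<le> nf * (mug * (1 / nf + eps * vnorm (Suc n) z))"
        by (rule mult_left_mono[OF h]) (use nf in auto)
      also have "\<dots> = mug + mug * eps * (nf * vnorm (Suc n) z)" using nf by (simp add: field_simps)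
      also have "\<dots> \<le> mug + mug * eps * muf"
        using zmf nf mug0 eps0 unfolding muf_def by (intro add_left_mono mult_left_mono) auto
      finally have "nf * vnorm (Suc n) z \<le> (1 + v) * mug" unfolding v_eq by (simp add: algebra_simps)
      then show "vnorm (Suc n) (rinv n d f x (Dl n d x w)) \<le> (1 + v) * mug / nf"
        unfolding z_def[symmetric] using nf by (simp add: field_simps)
    qed
    then show ?thesis unfolding muf_def using nf by (simp add: field_simps)
  qed
  define tf where "tf = (\<lambda>i. if i < n then of_nat (d i) * peval n d f i x else 0)"
  define tg where "tg = (\<lambda>i. if i < n then of_nat (d i) * peval n d g i x else 0)"
  define te where "te = (\<lambda>i. if i < n then of_nat (d i) * peval n d e i x else 0)"
  have tfc: "tf \<in> cspace n" "tg \<in> cspace n" unfolding tf_def tg_def cspace_def by auto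
  define zf where "zf = rinv n d f x tf"
  define zg where "zg = rinv n d g x tg"
  have zf: "zf \<in> perp n x" "Dfapp n d f x zf = tf" unfolding zf_def using rinv_prop[OF USf tfc(1)] by auto
  have zg: "zg \<in> perp n x" "Dfapp n d g x zg = tg" unfolding zg_def using rinv_prop[OF USg tfc(2)] by auto
  have delf: "delta n d f x = vnorm (Suc n) zf / r" unfolding delta_def zf_def tf_def r_def ..
  have delg: "delta n d g x = vnorm (Suc n) zg / r" unfolding delta_def zg_def tg_def r_def ..
  define zd where "zd = (\<lambda>j. zf j - zg j)"
  have zd: "zd \<in> perp n x" unfolding zd_def by (rule perp_sub[OF zf(1) zg(1)])
  have Afzd: "?A fh zd = (\<lambda>i. Dinv n d x te i - ?A e zg i)"
  proof -
    have "?A fh zd = (\<lambda>i. ?A fh zf i - ?A fh zg i)" unfolding zd_def Dfapp_zsub Dinv_sub ..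
    moreover have "?A fh zf = (\<lambda>i. complex_of_real (1 / nf) * Dinv n d x tf i)"
      unfolding fh_def Dfapp_hscale Dinv_scale zf(2) ..
    moreover have "?A gh zg = (\<lambda>i. complex_of_real (1 / ng) * Dinv n d x tg i)"
      unfolding gh_def Dfapp_hscale Dinv_scale zg(2) ..
    moreover have "Dinv n d x te = (\<lambda>i. complex_of_real (1 / nf) * Dinv n d x tf i - complex_of_real (1 / ng) * Dinv n d x tg i)"
    proof -
      have scnz: "complex_of_real (sc n d x i) \<noteq> 0" if "i < n" for i using pos that by auto
      have nz: "complex_of_real nf \<noteq> 0" "complex_of_real ng \<noteq> 0" using nf ng by auto
      show ?thesis unfolding te_def tf_def tg_def e_def fh_def gh_def Dinv_def
        using scnz nz by (intro ext) (auto simp: peval_diff peval_scale field_simps)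
    qed
    moreover note Ae[of zg]
    ultimately show ?thesis by (intro ext) (simp add: algebra_simps)
  qed
  have te_bound: "vnorm n (Dinv n d x te) \<le> sqrt (real DD) * r * E"
    using B2[OF dd, of x e] r unfolding te_def r_def E_def by simp
  have zd_bound: "vnorm (Suc n) zd \<le> v * r + v * vnorm (Suc n) zg"
  proof -
    have a: "vnorm (Suc n) zd \<le> muf * vnorm n (?A fh zd)" by (rule lowf[OF zd])
    have "vnorm n (?A fh zd) \<le> vnorm n (Dinv n d x te) + vnorm n (?A e zg)"
      unfolding Afzd by (rule vnorm_diff)
    also have "\<dots> \<le> sqrt (real DD) * r * E + eps * vnorm (Suc n) zg"
      using te_bound Ae_bound[of zg] by simp
    finally have b: "vnorm n (?A fh zd) \<le> sqrt (real DD) * r * E + eps * vnorm (Suc n) zg" .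
    have "muf * vnorm n (?A fh zd) \<le> muf * (sqrt (real DD) * r * E + eps * vnorm (Suc n) zg)"
      by (rule mult_left_mono[OF b muf0])
    with a have "vnorm (Suc n) zd \<le> muf * (sqrt (real DD) * r * E + eps * vnorm (Suc n) zg)"
      by linarith
    then show ?thesis unfolding v_def eps_def by (simp add: algebra_simps)
  qed
  have zf_le: "vnorm (Suc n) zf \<le> vnorm (Suc n) zg + vnorm (Suc n) zd"
  proof -
    have "zf = (\<lambda>j. zg j + zd j)" unfolding zd_def by simp
    then show ?thesis using vnorm_add[of "Suc n" zg zd] by simp
  qed
  have zg_le: "vnorm (Suc n) zg \<le> vnorm (Suc n) zf + vnorm (Suc n) zd"
  proof -
    have "zg = (\<lambda>j. zf j - zd j)" unfolding zd_def by simp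
    then show ?thesis using vnorm_diff[of "Suc n" zf zd] by simp
  qed
  have D1: "delta n d f x \<le> (1 + v) * delta n d g x + v"
  proof -
    have "(1 + v) * vnorm (Suc n) zg + v * r = vnorm (Suc n) zg + (v * r + v * vnorm (Suc n) zg)"
      by (simp add: algebra_simps)
    then have "vnorm (Suc n) zf \<le> (1 + v) * vnorm (Suc n) zg + v * r" using zf_le zd_bound by linarith
    then show ?thesis unfolding delf delg using r by (simp add: field_simps)
  qed
  have D2': "(1 - v) * delta n d g x - v \<le> delta n d f x"
  proof -
    have "(1 - v) * vnorm (Suc n) zg - v * r = vnorm (Suc n) zg - (v * r + v * vnorm (Suc n) zg)"
      by (simp add: algebra_simps)
    then have "(1 - v) * vnorm (Suc n) zg - v * r \<le> vnorm (Suc n) zf" using zg_le zd_bound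
      by linarith
    then have "((1 - v) * vnorm (Suc n) zg - v * r) / r \<le> vnorm (Suc n) zf / r"
      using r by (intro divide_right_mono) auto
    moreover have "(1 - v) * (vnorm (Suc n) zg / r) - v = ((1 - v) * vnorm (Suc n) zg - v * r) / r"
      using r by (simp add: field_simps)
    ultimately show ?thesis unfolding delf delg by simp
  qed
  define c where "c = real DD powr (3/2) / 2 * dR n x y"
  have c0: "c \<ge> 0" unfolding c_def using dR_nonneg[of n x y] by simp
  have U1: "(1 - v) * (c * mug) \<le> c * muf" using mult_left_mono[OF G1 c0] by (simp add: mult_ac)
  have U2: "c * muf \<le> (1 + v) * (c * mug)" using mult_left_mono[OF G2 c0] by (simp add: mult_ac)
  show ?thesis
    unfolding Let_def muf mug DD_def[symmetric]
    unfolding v_def[symmetric, unfolded E_def e_def fh_def gh_def nf_def ng_def] 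
    using U1 U2 D1 D2' unfolding c_def by (simp add: mult_ac)
qed


end
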